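(* Let $Q$ be a quadrilateral in $K^2$. The bisector locus of $Q$ is degenerate if and only if there is a pair $L,L'$ of parallel sides of $Q$ or the two diagonals $L,L'$ of $Q$ are parallel. In this case, the bisector locus of $Q$ is the union of the midline of $L$ and $L'$ and the line through the midpoints of $L$ and $L'$.
   Context: $K$ is a field of characteristic $\neq 2$, and we work in $K^2$ (inside the projective plane). Every line $L$ has an equation $tX-uY+v=0$ normalized so that $t=1$ if $u=0$ and $u=1$ if $u\neq 0$; the coefficients are denoted $t_L,u_L,v_L$. A quadrilateral $Q=ABA'B'$ consists of four distinct lines $A,B,A',B'$ (sides), not all through one point, with adjacent sides ($A,B$; $B,A'$; $A',B'$; $B',A$) not parallel; opposite sides ($A,A'$; $B,B'$) may be parallel. Vertices: $A\cap B$, $B\cap A'$, $A'\cap B'$, $B'\cap A$ (two may coincide if three sides are concurrent). Diagonals: the lines through nonadjacent vertices. The midpoint of a side or diagonal is the midpoint of the two vertices of $Q$ on it. The centroid $(h,k)$ is the midpoint of the midpoints of the diagonals (equivalently the average of the vertices). A diagonal point is the intersection of a pair of opposite sides or of the diagonals. The midline of two distinct parallel lines is the line formed by the midpoints of points of one with points of the other. Define $\alpha=t_Au_Bu_{A'}u_{B'}-u_At_Bu_{A'}u_{B'}+u_Au_Bt_{A'}u_{B'}-u_Au_Bu_{A'}t_{B'}$, $\beta=t_Au_Bt_{A'}u_{B'}-u_At_Bu_{A'}t_{B'}$, $\gamma=t_At_Bt_{A'}u_{B'}-t_At_Bu_{A'}t_{B'}+t_Au_Bt_{A'}t_{B'}-u_At_Bt_{A'}t_{B'}$,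 $\Phi_Q(X,Y)=\gamma X^2-2\beta XY+\alpha Y^2$. A line $\ell$ crosses a pair $\{\ell_1,\ell_2\}$ if it is distinct from both and not parallel to both; $\mathrm{mid}_{\{\ell_1,\ell_2\}}(\ell)$ is the midpoint of the points where $\ell$ meets $\ell_1,\ell_2$ (the point at infinity of $\ell$ if one of them is at infinity). $\ell$ bisects $Q$ if $\mathrm{mid}_{\mathsf P}(\ell)$ is the same for all pairs $\mathsf P$ among $\{A,A'\},\{B,B'\}$ that $\ell$ crosses; this common point is the midpoint of the bisector. The bisector locus of $Q$ is the set of midpoints of bisectors of $Q$; it is the zero set of the conic $\Phi_Q(X-h,Y-k)-\Phi_Q(a-h,b-k)$, where $(a,b)$ is any finite diagonal point of $Q$. A conic (quadratic polynomial) over $K$ is degenerate if it is a product of linear polynomials over the algebraic closure of $K$. *)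

theory Defs
  imports "HOL-Algebra.Algebraic_Closure_Type"
begin

text \<open>Points of K^2 are pairs. A line is stored by its normalized coefficient
triple (t, u, v) of the equation t X - u Y + v = 0, where t = 1 if u = 0 and
u = 1 if u is nonzero.\<close>

type_synonym 'a pt = "'a \<times> 'a"
type_synonym 'a line = "'a \<times> 'a \<times> 'a"

definition tL :: "'a line \<Rightarrow> 'a" where "tL L = fst L"
definition uL :: "'a line \<Rightarrow> 'a" where "uL L = fst (snd L)"
definition vL :: "'a line \<Rightarrow> 'a" where "vL L = snd (snd L)"

definition is_line :: "'a::field line \<Rightarrow> bool" where
  "is_line L \<longleftrightarrow> (uL L = 0 \<and> tL L = 1) \<or> uL L = 1"

definition on_line :: "'a::field pt \<Rightarrow> 'a line \<Rightarrow> bool" where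
  "on_line p L \<longleftrightarrow> tL L * fst p - uL L * snd p + vL L = 0"

definition points_of :: "'a::field line \<Rightarrow> 'a pt set" where
  "points_of L = {p. on_line p L}"

definition parallel :: "'a::field line \<Rightarrow> 'a line \<Rightarrow> bool" where
  "parallel L M \<longleftrightarrow> L \<noteq> M \<and> tL L = tL M \<and> uL L = uL M"

definition same_dir :: "'a::field line \<Rightarrow> 'a line \<Rightarrow> bool" where
  "same_dir L M \<longleftrightarrow> tL L = tL M \<and> uL L = uL M"

definition meet :: "'a::field line \<Rightarrow> 'a line \<Rightarrow> 'a pt" where
  "meet L M = (THE p. on_line p L \<and> on_line p M)"

definition line_through :: "'a::field pt \<Rightarrow> 'a pt \<Rightarrow> 'a line" where
  "line_through p q = (THE L. is_line L \<and> on_line p L \<and> on_line q L)"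

definition midpt :: "'a::field pt \<Rightarrow> 'a pt \<Rightarrow> 'a pt" where
  "midpt p q = ((fst p + fst q) / 2, (snd p + snd q) / 2)"

definition line_pts :: "'a::field pt \<Rightarrow> 'a pt \<Rightarrow> 'a pt set" where
  "line_pts p q = {(fst p + s * (fst q - fst p), snd p + s * (snd q - snd p)) | s. True}"

definition midline :: "'a::field line \<Rightarrow> 'a line \<Rightarrow> 'a pt set" where
  "midline L M = {midpt p q | p q. on_line p L \<and> on_line q M}"

definition is_quad :: "'a::field line \<Rightarrow> 'a line \<Rightarrow> 'a line \<Rightarrow> 'a line \<Rightarrow> bool" where
  "is_quad A B A' B' \<longleftrightarrow>
     is_line A \<and> is_line B \<and> is_line A' \<and> is_line B' \<and>
     distinct [A, B, A', B'] \<and>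
     \<not> (\<exists>p. on_line p A \<and> on_line p B \<and> on_line p A' \<and> on_line p B') \<and>
     \<not> same_dir A B \<and> \<not> same_dir B A' \<and> \<not> same_dir A' B' \<and> \<not> same_dir B' A"

definition V1 where "V1 A B A' B' = meet A B"
definition V2 where "V2 A B A' B' = meet B A'"
definition V3 where "V3 A B A' B' = meet A' B'"
definition V4 where "V4 A B A' B' = meet B' A"

definition diag1 :: "'a::field line \<Rightarrow> 'a line \<Rightarrow> 'a line \<Rightarrow> 'a line \<Rightarrow> 'a line" where
  "diag1 A B A' B' = line_through (V1 A B A' B') (V3 A B A' B')"
definition diag2 :: "'a::field line \<Rightarrow> 'a line \<Rightarrow> 'a line \<Rightarrow> 'a line \<Rightarrow> 'a line" where
  "diag2 A B A' B' = line_through (V2 A B A' B') (V4 A B A' B')"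

definition midA where "midA A B A' B' = midpt (V1 A B A' B') (V4 A B A' B')"
definition midB where "midB A B A' B' = midpt (V1 A B A' B') (V2 A B A' B')"
definition midA' where "midA' A B A' B' = midpt (V2 A B A' B') (V3 A B A' B')"
definition midB' where "midB' A B A' B' = midpt (V3 A B A' B') (V4 A B A' B')"
definition midD1 where "midD1 A B A' B' = midpt (V1 A B A' B') (V3 A B A' B')"
definition midD2 where "midD2 A B A' B' = midpt (V2 A B A' B') (V4 A B A' B')"

definition centroid :: "'a::field line \<Rightarrow> 'a line \<Rightarrow> 'a line \<Rightarrow> 'a line \<Rightarrow> 'a pt" where
  "centroid A B A' B' = midpt (midD1 A B A' B') (midD2 A B A' B')"

definition is_finite_diag_point :: "'a::field line \<Rightarrow> 'a line \<Rightarrow> 'a line \<Rightarrow> 'a line \<Rightarrow> 'a pt \<Rightarrow> bool" where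
  "is_finite_diag_point A B A' B' p \<longleftrightarrow>
     (\<not> same_dir A A' \<and> p = meet A A') \<or>
     (\<not> same_dir B B' \<and> p = meet B B') \<or>
     (\<not> same_dir (diag1 A B A' B') (diag2 A B A' B') \<and> p = meet (diag1 A B A' B') (diag2 A B A' B'))"

definition alphaQ :: "'a::field line \<Rightarrow> 'a line \<Rightarrow> 'a line \<Rightarrow> 'a line \<Rightarrow> 'a" where
  "alphaQ A B A' B' =
     tL A * uL B * uL A' * uL B' - uL A * tL B * uL A' * uL B'
     + uL A * uL B * tL A' * uL B' - uL A * uL B * uL A' * tL B'"
definition betaQ :: "'a::field line \<Rightarrow> 'a line \<Rightarrow> 'a line \<Rightarrow> 'a line \<Rightarrow> 'a" where
  "betaQ A B A' B' = tL A * uL B * tL A' * uL B' - uL A * tL B * uL A' * tL B'"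
definition gammaQ :: "'a::field line \<Rightarrow> 'a line \<Rightarrow> 'a line \<Rightarrow> 'a line \<Rightarrow> 'a" where
  "gammaQ A B A' B' =
     tL A * tL B * tL A' * uL B' - tL A * tL B * uL A' * tL B'
     + tL A * uL B * tL A' * tL B' - uL A * tL B * tL A' * tL B'"

definition PhiQ :: "'a::field line \<Rightarrow> 'a line \<Rightarrow> 'a line \<Rightarrow> 'a line \<Rightarrow> 'a \<Rightarrow> 'a \<Rightarrow> 'a" where
  "PhiQ A B A' B' x y =
     gammaQ A B A' B' * x^2 - 2 * betaQ A B A' B' * x * y + alphaQ A B A' B' * y^2"

text \<open>The conic Phi_Q(X-h,Y-k) - Phi_Q(a-h,b-k) is degenerate iff it is a product
of linear polynomials over the algebraic closure of K. As the algebraic closure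
is infinite, equality of polynomials is equality of polynomial functions on it;
a product of (at most degree one) linear polynomials of total degree at most two
has (after absorbing constant factors) exactly two factors.\<close>
definition conic_degenerate ::
  "'a::field line \<Rightarrow> 'a line \<Rightarrow> 'a line \<Rightarrow> 'a line \<Rightarrow> 'a pt \<Rightarrow> bool" where
  "conic_degenerate A B A' B' ab \<longleftrightarrow>
     (let cal = to_ac (alphaQ A B A' B'); cbe = to_ac (betaQ A B A' B');
          cga = to_ac (gammaQ A B A' B');
          ch = to_ac (fst (centroid A B A' B')); ck = to_ac (snd (centroid A B A' B'));
          cc = to_ac (PhiQ A B A' B' (fst ab - fst (centroid A B A' B'))
                                    (snd ab - snd (centroid A B A' B')))
      in \<exists>p1 q1 r1 p2 q2 r2 :: 'a alg_closure. \<forall>x y.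
           cga * (x - ch)^2 - 2 * cbe * (x - ch) * (y - ck) + cal * (y - ck)^2 - cc
             = (p1 * x + q1 * y + r1) * (p2 * x + q2 * y + r2))"

text \<open>The midpoint mid_{L1,L2}(l) is represented as an option:
None is the point at infinity of l (when l is parallel to one of L1, L2).\<close>
definition crosses :: "'a::field line \<Rightarrow> 'a line \<Rightarrow> 'a line \<Rightarrow> bool" where
  "crosses l L1 L2 \<longleftrightarrow> l \<noteq> L1 \<and> l \<noteq> L2 \<and> \<not> (same_dir l L1 \<and> same_dir l L2)"

definition midpair :: "'a::field line \<Rightarrow> 'a line \<Rightarrow> 'a line \<Rightarrow> 'a pt option" where
  "midpair L1 L2 l =
     (if same_dir l L1 \<or> same_dir l L2 then None else Some (midpt (meet l L1) (meet l L2)))"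

definition bisects_with_mid ::
  "'a::field line \<Rightarrow> 'a line \<Rightarrow> 'a line \<Rightarrow> 'a line \<Rightarrow> 'a line \<Rightarrow> 'a pt option \<Rightarrow> bool" where
  "bisects_with_mid A B A' B' l m \<longleftrightarrow>
     is_line l \<and> (crosses l A A' \<or> crosses l B B') \<and>
     (crosses l A A' \<longrightarrow> midpair A A' l = m) \<and>
     (crosses l B B' \<longrightarrow> midpair B B' l = m)"

definition bisector_locus :: "'a::field line \<Rightarrow> 'a line \<Rightarrow> 'a line \<Rightarrow> 'a line \<Rightarrow> 'a pt set" where
  "bisector_locus A B A' B' = {p. \<exists>l. bisects_with_mid A B A' B' l (Some p)}"

end

theory Submission
  imports Defs
begin

definition fv :: "'a::field line \<Rightarrow> 'a pt \<Rightarrow> 'a" where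
  "fv L p = tL L * fst p - uL L * snd p + vL L"
definition DD :: "'a::field line \<Rightarrow> 'a line \<Rightarrow> 'a" where
  "DD L M = tL L * uL M - uL L * tL M"

lemma on_line_fv: "on_line p L \<longleftrightarrow> fv L p = 0"
  by (simp add: on_line_def fv_def)

lemma is_line_nz: "is_line L \<Longrightarrow> tL L \<noteq> 0 \<or> uL L \<noteq> 0"
  by (auto simp: is_line_def)

lemma sd_iff: "is_line L \<Longrightarrow> is_line M \<Longrightarrow> same_dir L M \<longleftrightarrow> DD L M = 0"
  by (auto simp: is_line_def same_dir_def DD_def)

lemma line_eq_iff: "L = M \<longleftrightarrow> tL L = tL M \<and> uL L = uL M \<and> vL L = vL M"
  by (cases L; cases M) (auto simp: tL_def uL_def vL_def)

lemma line_eqI: "same_dir L M \<Longrightarrow> on_line p L \<Longrightarrow> on_line p M \<Longrightarrow> L = M"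
  unfolding line_eq_iff same_dir_def on_line_def by (metis add_left_cancel)

definition mform :: "'a::field line \<Rightarrow> 'a line \<Rightarrow> 'a pt" where
  "mform L M = ((uL L * vL M - vL L * uL M) / DD L M, (tL L * vL M - tL M * vL L) / DD L M)"

lemma on_line_frac: "(D::'a::field) \<noteq> 0 \<Longrightarrow> on_line (x / D, y / D) L \<longleftrightarrow> tL L * x - uL L * y + vL L * D = 0"
proof -
  assume D: "D \<noteq> 0"
  have "tL L * (x / D) - uL L * (y / D) + vL L = (tL L * x - uL L * y + vL L * D) / D"
    using D by (simp add: field_simps)
  then show ?thesis using D by (simp add: on_line_def)
qed

lemma mform_on: assumes "DD L M \<noteq> 0" shows "on_line (mform L M) L" "on_line (mform L M) M"
proof -
  have "tL L * (uL L * vL M - vL L * uL M) - uL L * (tL L * vL M - tL M * vL L) + vL L * DD L M = 0"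
    unfolding DD_def by (simp add: algebra_simps)
  then show "on_line (mform L M) L" using assms unfolding mform_def
    by (simp add: on_line_frac)
  have "tL M * (uL L * vL M - vL L * uL M) - uL M * (tL L * vL M - tL M * vL L) + vL M * DD L M = 0"
    unfolding DD_def by (simp add: algebra_simps)
  then show "on_line (mform L M) M" using assms unfolding mform_def
    by (simp add: on_line_frac)
qed

lemma mform_unique: assumes "DD L M \<noteq> 0" "on_line p L" "on_line p M" shows "p = mform L M"
proof -
  obtain x y where p: "p = (x,y)" by (cases p)
  have e1: "tL L * x - uL L * y + vL L = 0" "tL M * x - uL M * y + vL M = 0"
    using assms(2,3) unfolding p on_line_def by simp_all
  have "x * DD L M - (uL L * vL M - vL L * uL M) = uL M * (tL L * x - uL L * y + vL L) - uL L * (tL M * x - uL M * y + vL M)"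
    unfolding DD_def by (simp add: algebra_simps)
  hence x: "x * DD L M = uL L * vL M - vL L * uL M" unfolding e1 by simp
  have "y * DD L M - (tL L * vL M - tL M * vL L) = tL M * (tL L * x - uL L * y + vL L) - tL L * (tL M * x - uL M * y + vL M)"
    unfolding DD_def by (simp add: algebra_simps)
  hence y: "y * DD L M = tL L * vL M - tL M * vL L" unfolding e1 by simp
  have "x = (uL L * vL M - vL L * uL M) / DD L M" using x assms(1) by (simp add: eq_divide_eq)
  moreover have "y = (tL L * vL M - tL M * vL L) / DD L M" using y assms(1) by (simp add: eq_divide_eq)
  ultimately show ?thesis using p by (simp add: mform_def)
qed

lemma meet_eq: assumes "DD L M \<noteq> 0" shows "meet L M = mform L M"
  unfolding meet_def
proof (rule the_equality)
  show "on_line (mform L M) L \<and> on_line (mform L M) M" using mform_on[OF assms] by blast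
  fix p assume "on_line p L \<and> on_line p M" thus "p = mform L M" using mform_unique[OF assms] by blast
qed

lemma meet_on: assumes "DD L M \<noteq> 0" shows "on_line (meet L M) L" "on_line (meet L M) M"
  using mform_on[OF assms] unfolding meet_eq[OF assms] by auto

lemma meet_unique: assumes "DD L M \<noteq> 0" "on_line p L" "on_line p M" shows "p = meet L M"
  using mform_unique[OF assms] unfolding meet_eq[OF assms(1)] .

definition det3 :: "'a::field line \<Rightarrow> 'a line \<Rightarrow> 'a line \<Rightarrow> 'a" where
  "det3 L M N = tL L * (uL M * vL N - vL M * uL N) - uL L * (tL M * vL N - vL M * tL N) + vL L * (tL M * uL N - uL M * tL N)"

lemma fv_frac: "(D::'a::field) \<noteq> 0 \<Longrightarrow> fv L (x / D, y / D) = (tL L * x - uL L * y + vL L * D) / D"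
  by (simp add: fv_def field_simps)

lemma fv_meet: assumes "DD L M \<noteq> 0" shows "fv N (meet L M) = det3 L M N / DD L M"
proof -
  have "tL N * (uL L * vL M - vL L * uL M) - uL N * (tL L * vL M - tL M * vL L) + vL N * DD L M = det3 L M N"
    unfolding DD_def det3_def by (simp add: algebra_simps)
  then show ?thesis unfolding meet_eq[OF assms] mform_def fv_frac[OF assms] by simp
qed

definition lt_form :: "'a::field pt \<Rightarrow> 'a pt \<Rightarrow> 'a line" where
  "lt_form p q = (if fst p \<noteq> fst q then
     ((snd q - snd p) / (fst q - fst p), 1, snd p - (snd q - snd p) / (fst q - fst p) * fst p)
     else (1, 0, - fst p))"

lemma lt_form_props: assumes "p \<noteq> q"
  shows "is_line (lt_form p q)" "on_line p (lt_form p q)" "on_line q (lt_form p q)"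
proof -
  show "is_line (lt_form p q)" by (simp add: lt_form_def is_line_def tL_def uL_def)
  show "on_line p (lt_form p q)" by (simp add: lt_form_def on_line_def tL_def uL_def vL_def)
  show "on_line q (lt_form p q)"
  proof (cases "fst p = fst q")
    case True then show ?thesis by (simp add: lt_form_def on_line_def tL_def uL_def vL_def)
  next
    case False
    hence nz: "fst q - fst p \<noteq> 0" by simp
    define sl where "sl = (snd q - snd p) / (fst q - fst p)"
    have "sl * fst q - snd q + (snd p - sl * fst p) = sl * (fst q - fst p) - (snd q - snd p)" by (simp add: algebra_simps)
    also have "\<dots> = 0" using nz by (simp add: sl_def)
    finally have z: "sl * fst q - snd q + (snd p - sl * fst p) = 0" .
    have "lt_form p q = (sl, 1, snd p - sl * fst p)" using False by (simp add: lt_form_def sl_def)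
    then show ?thesis using z by (simp add: on_line_def tL_def uL_def vL_def)
  qed
qed

lemma line_unique2: assumes "is_line L" "is_line M" "p \<noteq> q" "on_line p L" "on_line q L" "on_line p M" "on_line q M"
  shows "L = M"
proof -
  have "DD L M = 0"
  proof (rule ccontr)
    assume "DD L M \<noteq> 0"
    hence "p = meet L M" "q = meet L M" using meet_unique assms by blast+
    thus False using assms(3) by simp
  qed
  hence "same_dir L M" using sd_iff assms(1,2) by blast
  thus ?thesis using line_eqI assms(4,6) by blast
qed

lemma line_through_eq: assumes "p \<noteq> q" shows "line_through p q = lt_form p q"
  unfolding line_through_def
proof (rule the_equality)
  show "is_line (lt_form p q) \<and> on_line p (lt_form p q) \<and> on_line q (lt_form p q)"
    using lt_form_props[OF assms] by blast
  fix L assume "is_line L \<and> on_line p L \<and> on_line q L"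
  thus "L = lt_form p q" using line_unique2[OF _ _ assms] lt_form_props[OF assms] by blast
qed

lemma line_through_props: assumes "p \<noteq> q"
  shows "is_line (line_through p q)" "on_line p (line_through p q)" "on_line q (line_through p q)"
  using lt_form_props[OF assms] unfolding line_through_eq[OF assms] by auto

lemma dir_param: assumes "is_line L" "on_line p L" "on_line q L"
  shows "\<exists>s. fst q - fst p = s * uL L \<and> snd q - snd p = s * tL L"
proof -
  have "tL L * (fst q - fst p) - uL L * (snd q - snd p) = fv L q - fv L p"
    unfolding fv_def by (simp add: algebra_simps)
  hence e: "tL L * (fst q - fst p) - uL L * (snd q - snd p) = 0"
    using assms(2,3) unfolding on_line_fv by simp
  from assms(1) consider "uL L = 0" "tL L = 1" | "uL L = 1" unfolding is_line_def by blast
  then show ?thesis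
  proof cases
    case 1 then show ?thesis using e by (intro exI[of _ "snd q - snd p"]) simp
  next
    case 2 then show ?thesis using e by (intro exI[of _ "fst q - fst p"]) (simp add: algebra_simps)
  qed
qed

lemma on_line_shift: "on_line (fst p + s * uL L, snd p + s * tL L) L \<longleftrightarrow> on_line p L"
proof -
  have "tL L * (fst p + s * uL L) - uL L * (snd p + s * tL L) + vL L = tL L * fst p - uL L * snd p + vL L"
    by (simp add: algebra_simps)
  thus ?thesis unfolding on_line_def by simp
qed

lemma fv_affine: "fv L (fst p + s * (fst q - fst p), snd p + s * (snd q - snd p)) = fv L p + s * (fv L q - fv L p)"
  unfolding fv_def by (simp add: algebra_simps)

lemma two4: "(2::'a::field) \<noteq> 0 \<Longrightarrow> (4::'a) \<noteq> 0"
proof -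
  assume "(2::'a) \<noteq> 0"
  moreover have "(4::'a) = 2 * 2" by simp
  ultimately show ?thesis by (metis mult_eq_0_iff)
qed

lemma fv_midpt: fixes p q :: "'a::field pt" assumes "(2::'a) \<noteq> 0"
  shows "fv L (midpt p q) * 2 = fv L p + fv L q"
  using assms two4[OF assms] unfolding fv_def midpt_def by (simp add: field_simps)

lemma line_pts_on: assumes "is_line L" "p \<noteq> q" "on_line p L" "on_line q L"
  shows "on_line x L \<longleftrightarrow> x \<in> line_pts p q"
proof
  assume x: "on_line x L"
  obtain s where s: "fst x - fst p = s * uL L" "snd x - snd p = s * tL L" using dir_param[OF assms(1,3) x] by blast
  obtain r where r: "fst q - fst p = r * uL L" "snd q - snd p = r * tL L" using dir_param[OF assms(1,3,4)] by blast
  have "r \<noteq> 0" using r assms(2) by (cases p; cases q) auto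
  have "x = (fst p + (s / r) * (fst q - fst p), snd p + (s / r) * (snd q - snd p))"
    using s r \<open>r \<noteq> 0\<close> by (cases x) (simp add: field_simps)
  thus "x \<in> line_pts p q" unfolding line_pts_def by blast
next
  assume "x \<in> line_pts p q"
  then obtain s where x: "x = (fst p + s * (fst q - fst p), snd p + s * (snd q - snd p))" unfolding line_pts_def by blast
  show "on_line x L" using assms(3,4) unfolding x on_line_fv fv_affine by simp
qed

definition WA :: "'a::field line \<Rightarrow> 'a line \<Rightarrow> 'a pt \<Rightarrow> 'a" where
  "WA L1 L2 m = fv L1 m * tL L2 + fv L2 m * tL L1"
definition WB :: "'a::field line \<Rightarrow> 'a line \<Rightarrow> 'a pt \<Rightarrow> 'a" where
  "WB L1 L2 m = fv L1 m * uL L2 + fv L2 m * uL L1"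
definition Psi :: "'a::field line \<Rightarrow> 'a line \<Rightarrow> 'a line \<Rightarrow> 'a line \<Rightarrow> 'a pt \<Rightarrow> 'a" where
  "Psi A B A' B' m = WA A A' m * WB B B' m - WB A A' m * WA B B' m"

lemma Psi_zero_dir:
  fixes xa xb ya yb ul tl :: "'a::field"
  assumes "xa * ul - xb * tl = 0" "ya * ul - yb * tl = 0" "ul \<noteq> 0 \<or> tl \<noteq> 0"
  shows "xa * yb - xb * ya = 0"
proof -
  have "(xa * yb - xb * ya) * ul = yb * (xa * ul - xb * tl) - xb * (ya * ul - yb * tl)"
    by (simp add: algebra_simps)
  hence h1: "(xa * yb - xb * ya) * ul = 0" using assms by simp
  have "(xa * yb - xb * ya) * tl = ya * (xa * ul - xb * tl) - xa * (ya * ul - yb * tl)"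
    by (simp add: algebra_simps)
  hence h2: "(xa * yb - xb * ya) * tl = 0" using assms by simp
  show ?thesis using h1 h2 assms(3) by auto
qed

lemma scal_eq: "WA L1 L2 m * uL l - WB L1 L2 m * tL l = fv L1 m * DD L2 l + fv L2 m * DD L1 l"
  unfolding WA_def WB_def DD_def by (simp add: algebra_simps)

lemma DD_swap: "DD L M = - DD M L" unfolding DD_def by (simp add: algebra_simps)
lemma DD_self: "DD L L = 0" unfolding DD_def by (simp add: algebra_simps)

lemma fv_shift: "fv L (fst p + s * uL l, snd p + s * tL l) = fv L p + s * DD L l"
  unfolding fv_def DD_def by (simp add: algebra_simps)

lemma midpt_on: fixes L :: "'a::field line" assumes "(2::'a) \<noteq> 0" "on_line p L" "on_line q L" shows "on_line (midpt p q) L"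
  using fv_midpt[OF assms(1), of L p q] assms(1-3) unfolding on_line_fv by simp

lemma midpair_some: assumes "is_line l" "is_line L1" "is_line L2" "midpair L1 L2 l = Some m"
  shows "DD l L1 \<noteq> 0" "DD l L2 \<noteq> 0" "m = midpt (meet l L1) (meet l L2)"
  using assms unfolding midpair_def by (auto split: if_splits simp: sd_iff)

lemma midpair_on: fixes l :: "'a::field line" assumes "(2::'a) \<noteq> 0" "is_line l" "is_line L1" "is_line L2" "midpair L1 L2 l = Some m"
  shows "on_line m l"
  using midpair_some[OF assms(2-5)] midpt_on[OF assms(1)] meet_on by metis

lemma pair_nec:
  fixes l L1 L2 :: "'a::field line"
  assumes two: "(2::'a) \<noteq> 0" and l: "is_line l" and L: "is_line L1" "is_line L2"
    and m: "on_line m l" and c: "crosses l L1 L2 \<longrightarrow> midpair L1 L2 l = Some m"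
  shows "fv L1 m * DD L2 l + fv L2 m * DD L1 l = 0"
proof (cases "crosses l L1 L2")
  case True
  hence mp: "midpair L1 L2 l = Some m" using c by blast
  note ms = midpair_some[OF l L mp]
  define P1 where "P1 = meet l L1"
  define P2 where "P2 = meet l L2"
  have P1: "fv l P1 = 0" "fv L1 P1 = 0" using meet_on[OF ms(1)] unfolding P1_def on_line_fv by auto
  have P2: "fv L2 P2 = 0" using meet_on[OF ms(2)] unfolding P2_def on_line_fv by auto
  have mm: "m = midpt P1 P2" using ms(3) unfolding P1_def P2_def .
  have P2e: "P2 = (2 * fst m - fst P1, 2 * snd m - snd P1)"
    using two unfolding mm midpt_def by (cases P1; cases P2) (simp add: add_divide_distrib)
  have fm: "fv l m = 0" using m unfolding on_line_fv .
  have "fv L1 m * DD L2 l + fv L2 m * DD L1 l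
      = DD L2 l * fv L1 P1 + DD L1 l * fv L2 (2 * fst m - fst P1, 2 * snd m - snd P1) + DD L1 L2 * (fv l P1 - fv l m)"
    unfolding fv_def DD_def by (simp add: algebra_simps)
  also have "\<dots> = 0" using P1 P2 fm P2e by simp
  finally show ?thesis .
next
  case False
  hence "l = L1 \<or> l = L2 \<or> (same_dir l L1 \<and> same_dir l L2)" unfolding crosses_def by blast
  then consider "l = L1" | "l = L2" | "same_dir l L1" "same_dir l L2" by blast
  moreover have fm: "fv l m = 0" using m unfolding on_line_fv .
  ultimately show ?thesis
  proof cases
    case 1 then show ?thesis using fm by (simp add: DD_self)
  next
    case 2 then show ?thesis using fm by (simp add: DD_self)
  next
    case 3
    hence "DD L1 l = 0" "DD L2 l = 0"
      using sd_iff[OF l L(1)] sd_iff[OF l L(2)] DD_swap[of L1 l] DD_swap[of L2 l] by simp_all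
    then show ?thesis by simp
  qed
qed

lemma pair_suff:
  fixes l L1 L2 :: "'a::field line"
  assumes two: "(2::'a) \<noteq> 0" and l: "is_line l" and L: "is_line L1" "is_line L2"
    and m: "on_line m l" and z: "fv L1 m * DD L2 l + fv L2 m * DD L1 l = 0"
    and c: "crosses l L1 L2"
  shows "midpair L1 L2 l = Some m"
proof -
  have n1: "\<not> same_dir l L1"
  proof
    assume s1: "same_dir l L1"
    hence "\<not> same_dir l L2" using c unfolding crosses_def by blast
    hence "DD l L2 \<noteq> 0" using sd_iff[OF l L(2)] by blast
    hence d2: "DD L2 l \<noteq> 0" using DD_swap[of L2 l] by simp
    have "DD L1 l = 0" using s1 sd_iff[OF l L(1)] DD_swap[of L1 l] by simp
    hence "fv L1 m = 0" using z d2 by simp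
    hence "l = L1" using line_eqI[OF s1 m] unfolding on_line_fv by blast
    thus False using c unfolding crosses_def by blast
  qed
  have n2: "\<not> same_dir l L2"
  proof
    assume s2: "same_dir l L2"
    hence "\<not> same_dir l L1" using c unfolding crosses_def by blast
    hence "DD l L1 \<noteq> 0" using sd_iff[OF l L(1)] by blast
    hence d1: "DD L1 l \<noteq> 0" using DD_swap[of L1 l] by simp
    have "DD L2 l = 0" using s2 sd_iff[OF l L(2)] DD_swap[of L2 l] by simp
    hence "fv L2 m = 0" using z d1 by simp
    hence "l = L2" using line_eqI[OF s2 m] unfolding on_line_fv by blast
    thus False using c unfolding crosses_def by blast
  qed
  have d1: "DD l L1 \<noteq> 0" "DD L1 l \<noteq> 0" using n1 sd_iff[OF l L(1)] DD_swap[of L1 l] by auto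
  have d2: "DD l L2 \<noteq> 0" "DD L2 l \<noteq> 0" using n2 sd_iff[OF l L(2)] DD_swap[of L2 l] by auto
  define s1 where "s1 = - fv L1 m / DD L1 l"
  define s2 where "s2 = - fv L2 m / DD L2 l"
  define P1 where "P1 = (fst m + s1 * uL l, snd m + s1 * tL l)"
  define P2 where "P2 = (fst m + s2 * uL l, snd m + s2 * tL l)"
  have "on_line P1 l" "on_line P2 l" using m on_line_shift unfolding P1_def P2_def by blast+
  moreover have "fv L1 P1 = 0" unfolding P1_def fv_shift s1_def using d1 by simp
  moreover have "fv L2 P2 = 0" unfolding P2_def fv_shift s2_def using d2 by simp
  ultimately have e: "meet l L1 = P1" "meet l L2 = P2" using meet_unique d1 d2 unfolding on_line_fv[symmetric] by metis+
  have "s1 + s2 = - (fv L1 m * DD L2 l + fv L2 m * DD L1 l) / (DD L1 l * DD L2 l)"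
    unfolding s1_def s2_def using d1 d2 by (simp add: field_simps)
  hence s0: "s1 + s2 = 0" using z by simp
  have h1: "fst m + s1 * uL l + (fst m + s2 * uL l) = 2 * fst m + (s1 + s2) * uL l" by (simp add: algebra_simps)
  have h2: "snd m + s1 * tL l + (snd m + s2 * tL l) = 2 * snd m + (s1 + s2) * tL l" by (simp add: algebra_simps)
  have "midpt P1 P2 = m"
    unfolding P1_def P2_def midpt_def using two s0 h1 h2 by (cases m) simp
  thus ?thesis unfolding midpair_def e using n1 n2 by simp
qed

locale quad =
  fixes A B A' B' :: "'a::field line"
  assumes two: "(2::'a) \<noteq> 0" and Q: "is_quad A B A' B'"
begin

lemma lines: "is_line A" "is_line B" "is_line A'" "is_line B'"
  using Q unfolding is_quad_def by auto

lemma dist: "A \<noteq> B" "A \<noteq> A'" "A \<noteq> B'" "B \<noteq> A'" "B \<noteq> B'" "A' \<noteq> B'"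
  using Q unfolding is_quad_def by auto

lemma nsd: "\<not> same_dir A B" "\<not> same_dir B A'" "\<not> same_dir A' B'" "\<not> same_dir B' A"
  using Q unfolding is_quad_def by auto

lemma nconc: "\<not> (on_line p A \<and> on_line p B \<and> on_line p A' \<and> on_line p B')"
  using Q unfolding is_quad_def by blast

lemma Dnz: "DD A B \<noteq> 0" "DD B A' \<noteq> 0" "DD A' B' \<noteq> 0" "DD B' A \<noteq> 0"
  using nsd sd_iff lines by blast+

lemma crosses_some: assumes "is_line l" shows "crosses l A A' \<or> crosses l B B'"
proof (rule ccontr)
  assume "\<not> (crosses l A A' \<or> crosses l B B')"
  hence c1: "l = A \<or> l = A' \<or> (same_dir l A \<and> same_dir l A')"
    and c2: "l = B \<or> l = B' \<or> (same_dir l B \<and> same_dir l B')"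
    unfolding crosses_def by blast+
  have sdt: "same_dir L1 L2 \<Longrightarrow> same_dir L1 L3 \<Longrightarrow> same_dir L2 L3" for L1 L2 L3 :: "'a line"
    unfolding same_dir_def by simp
  have sdr: "same_dir L1 L1" for L1 :: "'a line" unfolding same_dir_def by simp
  have sds: "same_dir L1 L2 \<Longrightarrow> same_dir L2 L1" for L1 L2 :: "'a line" unfolding same_dir_def by simp
  have "same_dir l A \<or> same_dir l A'" using c1 sdr by blast
  moreover have "same_dir l B \<or> same_dir l B'" using c2 sdr by blast
  ultimately show False using nsd sdt sds by metis
qed

lemma mk_line:
  fixes m :: "'a pt" and p q :: 'a
  assumes "p \<noteq> 0 \<or> q \<noteq> 0"
  shows "\<exists>l. is_line l \<and> on_line m l \<and> (\<forall>a b. a * p - b * q = 0 \<longrightarrow> a * uL l - b * tL l = 0)"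
proof (cases "p = 0")
  case False
  define l where "l = (q / p, 1::'a, snd m - q / p * fst m)"
  have "is_line l" unfolding l_def is_line_def by (simp add: tL_def uL_def)
  moreover have "on_line m l" unfolding l_def on_line_def by (simp add: tL_def uL_def vL_def)
  moreover have "a * uL l - b * tL l = 0" if "a * p - b * q = 0" for a b
  proof -
    have "a * uL l - b * tL l = (a * p - b * q) / p" using False unfolding l_def by (simp add: tL_def uL_def field_simps)
    thus ?thesis using that by simp
  qed
  ultimately show ?thesis by blast
next
  case True
  hence q: "q \<noteq> 0" using assms by blast
  define l where "l = (1::'a, 0::'a, - fst m)"
  have "is_line l" unfolding l_def is_line_def by (simp add: tL_def uL_def)
  moreover have "on_line m l" unfolding l_def on_line_def by (simp add: tL_def uL_def vL_def)
  moreover have "a * uL l - b * tL l = 0" if "a * p - b * q = 0" for a b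
    using that True q unfolding l_def by (simp add: tL_def uL_def)
  ultimately show ?thesis by blast
qed

lemma locus_iff: "m \<in> bisector_locus A B A' B' \<longleftrightarrow> Psi A B A' B' m = 0"
proof
  assume "m \<in> bisector_locus A B A' B'"
  then obtain l where b: "bisects_with_mid A B A' B' l (Some m)" unfolding bisector_locus_def by blast
  hence l: "is_line l" and cr: "crosses l A A' \<or> crosses l B B'"
    and c1: "crosses l A A' \<longrightarrow> midpair A A' l = Some m"
    and c2: "crosses l B B' \<longrightarrow> midpair B B' l = Some m"
    unfolding bisects_with_mid_def by blast+
  have m: "on_line m l" using cr c1 c2 midpair_on[OF two l] lines by metis
  have z1: "fv A m * DD A' l + fv A' m * DD A l = 0" using pair_nec[OF two l lines(1,3) m c1] .
  have z2: "fv B m * DD B' l + fv B' m * DD B l = 0" using pair_nec[OF two l lines(2,4) m c2] .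
  have "WA A A' m * WB B B' m - WB A A' m * WA B B' m = 0"
    using Psi_zero_dir[of "WA A A' m" "uL l" "WB A A' m" "tL l" "WA B B' m" "WB B B' m"]
      z1 z2 scal_eq is_line_nz[OF l] by metis
  thus "Psi A B A' B' m = 0" unfolding Psi_def .
next
  assume P: "Psi A B A' B' m = 0"
  define xa where "xa = WA A A' m"
  define xb where "xb = WB A A' m"
  define ya where "ya = WA B B' m"
  define yb where "yb = WB B B' m"
  have P': "xa * yb - xb * ya = 0" using P unfolding Psi_def xa_def xb_def ya_def yb_def .
  obtain p q :: 'a where pq: "p \<noteq> 0 \<or> q \<noteq> 0" "xa * p - xb * q = 0" "ya * p - yb * q = 0"
  proof (cases "xa \<noteq> 0 \<or> xb \<noteq> 0")
    case True
    show ?thesis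
      by (rule that[of xb xa]) (use True P' in \<open>auto simp: algebra_simps\<close>)
  next
    case False
    hence xz: "xa = 0" "xb = 0" by auto
    show ?thesis
    proof (cases "ya \<noteq> 0 \<or> yb \<noteq> 0")
      case True
      show ?thesis by (rule that[of yb ya]) (use True xz in \<open>auto simp: algebra_simps\<close>)
    next
      case False
      show ?thesis by (rule that[of 1 0]) (use False xz in auto)
    qed
  qed
  obtain l where l: "is_line l" "on_line m l" and lw: "\<forall>a b. a * p - b * q = 0 \<longrightarrow> a * uL l - b * tL l = 0"
    using mk_line[OF pq(1)] by blast
  have z1: "fv A m * DD A' l + fv A' m * DD A l = 0"
    using lw pq(2) scal_eq[of A A' m l] unfolding xa_def xb_def by metis
  have z2: "fv B m * DD B' l + fv B' m * DD B l = 0"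
    using lw pq(3) scal_eq[of B B' m l] unfolding ya_def yb_def by metis
  have "bisects_with_mid A B A' B' l (Some m)"
    unfolding bisects_with_mid_def
    using l crosses_some[OF l(1)] pair_suff[OF two l(1) lines(1,3) l(2) z1] pair_suff[OF two l(1) lines(2,4) l(2) z2]
    by blast
  thus "m \<in> bisector_locus A B A' B'" unfolding bisector_locus_def by blast
qed

end

lemma det3_cyc: "det3 L M N = det3 M N L" unfolding det3_def by (simp add: algebra_simps)

lemma plucker: "DD A B * DD A' B' - DD B A' * DD B' A = DD A A' * DD B B'"
  unfolding DD_def by (simp add: algebra_simps)

lemma half_id: "det3 A B A' * det3 B A' B' * DD B' A + det3 A' B' A * det3 B' A B * DD B A'
  = det3 A B A' * det3 B' A B * DD A' B' + det3 B A' B' * det3 A' B' A * DD A B"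
  unfolding DD_def det3_def by (simp add: algebra_simps)

lemma vec_id_t: "det3 A B A' * DD A' B' * DD B' A * tL B + det3 A' B' A * DD A B * DD B A' * tL B'
  + det3 B' A B * DD B A' * DD A' B' * tL A + det3 B A' B' * DD A B * DD B' A * tL A' = 0"
  unfolding DD_def det3_def by (simp add: algebra_simps)

lemma vec_id_u: "det3 A B A' * DD A' B' * DD B' A * uL B + det3 A' B' A * DD A B * DD B A' * uL B'
  + det3 B' A B * DD B A' * DD A' B' * uL A + det3 B A' B' * DD A B * DD B' A * uL A' = 0"
  unfolding DD_def det3_def by (simp add: algebra_simps)

lemma disc_id: "alphaQ A B A' B' * gammaQ A B A' B' - betaQ A B A' B' ^ 2 = - (DD A B * DD B A' * DD A' B' * DD B' A)"
  unfolding DD_def alphaQ_def betaQ_def gammaQ_def by (simp add: algebra_simps power2_eq_square)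

definition Qf :: "'a::field line \<Rightarrow> 'a line \<Rightarrow> 'a line \<Rightarrow> 'a line \<Rightarrow> 'a \<Rightarrow> 'a \<Rightarrow> 'a \<Rightarrow> 'a \<Rightarrow> 'a" where
  "Qf A B A' B' lA lA' lB lB' = lA * lB * DD A' B' - lA * lB' * DD B A' - lA' * lB * DD B' A + lA' * lB' * DD A B"

lemma Psi_Qf: "Psi A B A' B' m = Qf A B A' B' (fv A m) (fv A' m) (fv B m) (fv B' m)"
  unfolding Psi_def Qf_def WA_def WB_def DD_def by (simp add: algebra_simps)

definition lf :: "'a::field line \<Rightarrow> 'a pt \<Rightarrow> 'a" where
  "lf L w = tL L * fst w - uL L * snd w"

lemma Qf_lf: "Qf A B A' B' (lf A w) (lf A' w) (lf B w) (lf B' w) = 2 * PhiQ A B A' B' (fst w) (snd w)"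
  unfolding Qf_def lf_def DD_def PhiQ_def alphaQ_def betaQ_def gammaQ_def by (simp add: algebra_simps power2_eq_square)

definition Qbf :: "'a::field line \<Rightarrow> 'a line \<Rightarrow> 'a line \<Rightarrow> 'a line \<Rightarrow> 'a \<Rightarrow> 'a \<Rightarrow> 'a \<Rightarrow> 'a \<Rightarrow> 'a \<Rightarrow> 'a \<Rightarrow> 'a \<Rightarrow> 'a \<Rightarrow> 'a" where
  "Qbf A B A' B' FA FA' FB FB' lA lA' lB lB' =
     (FA * lB + lA * FB) * DD A' B' - (FA * lB' + lA * FB') * DD B A'
     - (FA' * lB + lA' * FB) * DD B' A + (FA' * lB' + lA' * FB') * DD A B"

lemma Qf_add: "Qf A B A' B' (FA + lA) (FA' + lA') (FB + lB) (FB' + lB')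
  = Qf A B A' B' FA FA' FB FB' + Qf A B A' B' lA lA' lB lB' + Qbf A B A' B' FA FA' FB FB' lA lA' lB lB'"
  unfolding Qf_def Qbf_def by (simp add: algebra_simps)

lemma atom_Qb:
  fixes a b c d D1 D2 D3 D4 lA lA' lB lB' k :: "'a::field"
  assumes "D1 \<noteq> 0" "D2 \<noteq> 0" "D3 \<noteq> 0" "D4 \<noteq> 0" "k \<noteq> 0"
  shows "((a/D2 + c/D3)/k * lB + lA * ((b/D3 + d/D4)/k)) * D3 - ((a/D2 + c/D3)/k * lB' + lA * ((d/D1 + b/D2)/k)) * D2
     - ((a/D1 + c/D4)/k * lB + lA' * ((b/D3 + d/D4)/k)) * D4 + ((a/D1 + c/D4)/k * lB' + lA' * ((d/D1 + b/D2)/k)) * D1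
   = (D1*D3 - D2*D4) * (a*D3*D4*lB + c*D1*D2*lB' + d*D2*D3*lA + b*D1*D4*lA') / (k*D1*D2*D3*D4)"
  using assms by (simp add: field_simps)

lemma atom_Qcen:
  fixes a b c d D1 D2 D3 D4 k :: "'a::field"
  assumes "D1 \<noteq> 0" "D2 \<noteq> 0" "D3 \<noteq> 0" "D4 \<noteq> 0" "k \<noteq> 0"
  shows "(a/D2 + c/D3)/k * ((b/D3 + d/D4)/k) * D3 - (a/D2 + c/D3)/k * ((d/D1 + b/D2)/k) * D2
     - (a/D1 + c/D4)/k * ((b/D3 + d/D4)/k) * D4 + (a/D1 + c/D4)/k * ((d/D1 + b/D2)/k) * D1
   = (D1*D3 - D2*D4) * (a*b*D4 + a*d*D3 + b*c*D1 + c*d*D2) / (k*k*D1*D2*D3*D4)"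
  using assms by (simp add: field_simps)

context quad begin

abbreviation "v1 \<equiv> V1 A B A' B'"
abbreviation "v2 \<equiv> V2 A B A' B'"
abbreviation "v3 \<equiv> V3 A B A' B'"
abbreviation "v4 \<equiv> V4 A B A' B'"
abbreviation "D1 \<equiv> DD A B"
abbreviation "D2 \<equiv> DD B A'"
abbreviation "D3 \<equiv> DD A' B'"
abbreviation "D4 \<equiv> DD B' A"
abbreviation "da \<equiv> det3 A B A'"
abbreviation "db \<equiv> det3 B A' B'"
abbreviation "dc \<equiv> det3 A' B' A"
abbreviation "dd \<equiv> det3 B' A B"
abbreviation "cen \<equiv> centroid A B A' B'"

lemma vert_on: "on_line v1 A" "on_line v1 B" "on_line v2 B" "on_line v2 A'"
  "on_line v3 A'" "on_line v3 B'" "on_line v4 B'" "on_line v4 A"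
  unfolding V1_def V2_def V3_def V4_def using meet_on Dnz by blast+

lemma vf:
  "fv A v1 = 0" "fv B v1 = 0" "fv A' v1 = da / D1" "fv B' v1 = dd / D1"
  "fv B v2 = 0" "fv A' v2 = 0" "fv A v2 = da / D2" "fv B' v2 = db / D2"
  "fv A' v3 = 0" "fv B' v3 = 0" "fv A v3 = dc / D3" "fv B v3 = db / D3"
  "fv B' v4 = 0" "fv A v4 = 0" "fv A' v4 = dc / D4" "fv B v4 = dd / D4"
proof -
  show "fv A v1 = 0" "fv B v1 = 0" "fv B v2 = 0" "fv A' v2 = 0" "fv A' v3 = 0" "fv B' v3 = 0"
    "fv B' v4 = 0" "fv A v4 = 0" using vert_on unfolding on_line_fv by auto
  show "fv A' v1 = da / D1" unfolding V1_def fv_meet[OF Dnz(1)] ..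
  show "fv B' v1 = dd / D1" unfolding V1_def fv_meet[OF Dnz(1)] by (simp add: det3_cyc[of A B B'] det3_cyc[of B B' A])
  show "fv A v2 = da / D2" unfolding V2_def fv_meet[OF Dnz(2)] by (simp add: det3_cyc[of B A' A] det3_cyc[of A' A B])
  show "fv B' v2 = db / D2" unfolding V2_def fv_meet[OF Dnz(2)] ..
  show "fv A v3 = dc / D3" unfolding V3_def fv_meet[OF Dnz(3)] ..
  show "fv B v3 = db / D3" unfolding V3_def fv_meet[OF Dnz(3)] by (simp add: det3_cyc[of B A' B', symmetric])
  show "fv A' v4 = dc / D4" unfolding V4_def fv_meet[OF Dnz(4)] by (simp add: det3_cyc[of B' A A'] det3_cyc[of A A' B'])
  show "fv B v4 = dd / D4" unfolding V4_def fv_meet[OF Dnz(4)] ..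
qed

lemma two16: "(4::'a) \<noteq> 0" using two4[OF two] .

lemma fv_cen: "fv L cen * 4 = fv L v1 + fv L v2 + fv L v3 + fv L v4"
proof -
  have "fv L cen * 2 = fv L (midD1 A B A' B') + fv L (midD2 A B A' B')"
    unfolding centroid_def using fv_midpt[OF two] .
  moreover have "fv L (midD1 A B A' B') * 2 = fv L v1 + fv L v3" unfolding midD1_def using fv_midpt[OF two] .
  moreover have "fv L (midD2 A B A' B') * 2 = fv L v2 + fv L v4" unfolding midD2_def using fv_midpt[OF two] .
  ultimately have "fv L cen * 4 = (fv L (midD1 A B A' B') + fv L (midD2 A B A' B')) * 2"
    by (metis (no_types, lifting) mult.assoc num_double numeral_times_numeral)
  thus ?thesis using \<open>fv L (midD1 A B A' B') * 2 = _\<close> \<open>fv L (midD2 A B A' B') * 2 = _\<close>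
    by (simp add: algebra_simps)
qed

lemma Fcen:
  "fv A cen = (da / D2 + dc / D3) / 4" "fv A' cen = (da / D1 + dc / D4) / 4"
  "fv B cen = (db / D3 + dd / D4) / 4" "fv B' cen = (dd / D1 + db / D2) / 4"
  using fv_cen[of A] fv_cen[of A'] fv_cen[of B] fv_cen[of B'] two16 unfolding vf
  by (simp_all add: eq_divide_eq algebra_simps)

end

definition det2 :: "'a::field pt \<Rightarrow> 'a pt \<Rightarrow> 'a" where
  "det2 p q = fst p * snd q - snd p * fst q"

definition psub :: "'a::field pt \<Rightarrow> 'a pt \<Rightarrow> 'a pt" where
  "psub p q = (fst p - fst q, snd p - snd q)"

lemma fv_lf: "fv L m = fv L p + lf L (psub m p)"
  unfolding fv_def lf_def psub_def by (simp add: algebra_simps)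

lemma atom_K4:
  fixes s r a b c d D1 D2 D3 D4 fA fA' fB fB' :: "'a::field"
  assumes D: "D1 \<noteq> 0" "D2 \<noteq> 0" "D3 \<noteq> 0" "D4 \<noteq> 0"
    and h: "fA = s * (c / D3)" "fA = a / D2 - r * (a / D2)"
      "fA' = a / D1 - s * (a / D1)" "fA' = r * (c / D4)"
      "fB = s * (b / D3)" "fB = r * (d / D4)"
      "fB' = d / D1 - s * (d / D1)" "fB' = b / D2 - r * (b / D2)"
  shows "fA * fB * D3 - fA * fB' * D2 - fA' * fB * D4 + fA' * fB' * D1 = 0"
proof -
  have e1: "fA * D3 = s * c" "fA * D2 = a - r * a" "fA' * D1 = a - s * a" "fA' * D4 = r * c"
    subgoal using h(1) D(3) by simp
    subgoal using h(2) D(2) by (simp add: field_simps)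
    subgoal using h(3) D(1) by (simp add: field_simps)
    subgoal using h(4) D(4) by simp
    done
  have "fA * fB * D3 - fA * fB' * D2 - fA' * fB * D4 + fA' * fB' * D1
      = (fA * D3) * fB - (fA * D2) * fB' - (fA' * D4) * fB + (fA' * D1) * fB'" by (simp add: algebra_simps)
  also have "\<dots> = (s - r) * (c * fB - a * fB')" unfolding e1 by (simp add: algebra_simps)
  also have "c * fB = d * fA'" unfolding h(6) h(4) by (simp add: algebra_simps)
  also have "a * fB' = d * fA'" unfolding h(7) h(3) by (simp add: algebra_simps)
  finally show ?thesis by simp
qed

context quad begin

lemma Psi_expand: "Psi A B A' B' m = Psi A B A' B' cen + 2 * PhiQ A B A' B' (fst m - fst cen) (snd m - snd cen)"
proof -
  define w where "w = psub m cen"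
  have "Psi A B A' B' m = Qf A B A' B' (fv A cen + lf A w) (fv A' cen + lf A' w) (fv B cen + lf B w) (fv B' cen + lf B' w)"
    unfolding Psi_Qf w_def using fv_lf by metis
  also have "\<dots> = Psi A B A' B' cen + 2 * PhiQ A B A' B' (fst w) (snd w)
        + Qbf A B A' B' (fv A cen) (fv A' cen) (fv B cen) (fv B' cen) (lf A w) (lf A' w) (lf B w) (lf B' w)"
    unfolding Qf_add Qf_lf Psi_Qf ..
  also have "Qbf A B A' B' (fv A cen) (fv A' cen) (fv B cen) (fv B' cen) (lf A w) (lf A' w) (lf B w) (lf B' w)
      = (D1*D3 - D2*D4) * (da*D3*D4*lf B w + dc*D1*D2*lf B' w + dd*D2*D3*lf A w + db*D1*D4*lf A' w) / (4*D1*D2*D3*D4)"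
    unfolding Qbf_def Fcen by (rule atom_Qb[OF Dnz two16])
  also have "da*D3*D4*lf B w + dc*D1*D2*lf B' w + dd*D2*D3*lf A w + db*D1*D4*lf A' w
      = fst w * (da * D3 * D4 * tL B + dc * D1 * D2 * tL B' + dd * D2 * D3 * tL A + db * D1 * D4 * tL A')
      - snd w * (da * D3 * D4 * uL B + dc * D1 * D2 * uL B' + dd * D2 * D3 * uL A + db * D1 * D4 * uL A')"
    unfolding lf_def by (simp add: algebra_simps)
  also have "\<dots> = 0" using vec_id_t[of A B A' B'] vec_id_u[of A B A' B'] by simp
  finally show ?thesis unfolding w_def psub_def by simp
qed

lemma Psi_cen: "Psi A B A' B' cen * (16 * (D1 * D2 * D3 * D4)) = 2 * (DD A A' * DD B B') * (da * db * D4 + dc * dd * D2)"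
proof -
  have "Psi A B A' B' cen = (D1*D3 - D2*D4) * (da*db*D4 + da*dd*D3 + db*dc*D1 + dc*dd*D2) / (4*4*D1*D2*D3*D4)"
    unfolding Psi_Qf Qf_def Fcen by (rule atom_Qcen[OF Dnz two16])
  also have "da*db*D4 + da*dd*D3 + db*dc*D1 + dc*dd*D2 = 2 * (da * db * D4 + dc * dd * D2)"
    using half_id[of A B A' B'] by (simp add: algebra_simps)
  also have "D1*D3 - D2*D4 = DD A A' * DD B B'" using plucker[of A B A' B'] .
  finally have e: "Psi A B A' B' cen = DD A A' * DD B B' * (2 * (da * db * D4 + dc * dd * D2)) / (4*4*D1*D2*D3*D4)" .
  have "(16::'a) = 4 * 4" by simp
  hence "(16::'a) \<noteq> 0" using two16 by (metis mult_eq_0_iff)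
  hence nz: "4*4*D1*D2*D3*D4 \<noteq> 0" using Dnz by simp
  have "Psi A B A' B' cen * (4*4*D1*D2*D3*D4) = DD A A' * DD B B' * (2 * (da * db * D4 + dc * dd * D2))"
    unfolding e using nz by simp
  moreover have "(4*4*D1*D2*D3*D4) = 16 * (D1 * D2 * D3 * D4)" by (simp add: algebra_simps)
  ultimately show ?thesis by (simp add: algebra_simps)
qed

abbreviation "dl \<equiv> det2 (psub v3 v1) (psub v4 v2)"

lemma delta_eq: "dl * (D1 * D2 * D3 * D4) = - (da * db * D4 + dc * dd * D2)"
proof -
  have "D1 * dl = - ((fv A v3 - fv A v1) * (fv B v4 - fv B v2) - (fv A v4 - fv A v2) * (fv B v3 - fv B v1))"
    unfolding det2_def psub_def fv_def DD_def by (simp add: algebra_simps)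
  also have "\<dots> = - ((dc / D3) * (dd / D4) + (da / D2) * (db / D3))" unfolding vf by simp
  finally have "D1 * dl = - ((dc / D3) * (dd / D4) + (da / D2) * (db / D3))" .
  thus ?thesis using Dnz by (simp add: field_simps)
qed

lemma c_formula:
  assumes "Psi A B A' B' p = 0"
  shows "PhiQ A B A' B' (fst p - fst cen) (snd p - snd cen) * 16 = DD A A' * DD B B' * dl"
proof -
  have e: "Psi A B A' B' cen = - 2 * PhiQ A B A' B' (fst p - fst cen) (snd p - snd cen)"
    using Psi_expand[of p] assms by (simp add: eq_neg_iff_add_eq_0)
  have "- 2 * PhiQ A B A' B' (fst p - fst cen) (snd p - snd cen) * (16 * (D1 * D2 * D3 * D4))
     = 2 * (DD A A' * DD B B') * (- (dl * (D1 * D2 * D3 * D4)))"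
    using Psi_cen delta_eq unfolding e by simp
  hence "2 * (D1 * D2 * D3 * D4) * (PhiQ A B A' B' (fst p - fst cen) (snd p - snd cen) * 16 - DD A A' * DD B B' * dl) = 0"
    by (simp add: algebra_simps)
  thus ?thesis using two Dnz by simp
qed

end

lemma sd_dir:
  assumes L: "is_line L" "on_line p L" "on_line q L" "p \<noteq> q"
    and M: "is_line M" "on_line r M" "on_line s M" "r \<noteq> s"
  shows "DD L M = 0 \<longleftrightarrow> det2 (psub q p) (psub s r) = 0"
proof -
  obtain x where x: "fst q - fst p = x * uL L" "snd q - snd p = x * tL L" using dir_param[OF L(1-3)] by blast
  obtain y where y: "fst s - fst r = y * uL M" "snd s - snd r = y * tL M" using dir_param[OF M(1-3)] by blast
  have x0: "x \<noteq> 0" using x L(4) by (cases p; cases q) auto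
  have y0: "y \<noteq> 0" using y M(4) by (cases r; cases s) auto
  have "det2 (psub q p) (psub s r) = (x * uL L) * (y * tL M) - (x * tL L) * (y * uL M)"
    unfolding det2_def psub_def x y by simp
  also have "\<dots> = - (x * y) * DD L M" unfolding DD_def by (simp add: algebra_simps)
  finally show ?thesis using x0 y0 by simp
qed

context quad begin

abbreviation "d1 \<equiv> diag1 A B A' B'"
abbreviation "d2 \<equiv> diag2 A B A' B'"

lemma v13: "v1 \<noteq> v3"
  using vert_on nconc by metis

lemma v24: "v2 \<noteq> v4"
  using vert_on nconc by metis

lemma diag_props: "is_line d1" "on_line v1 d1" "on_line v3 d1" "is_line d2" "on_line v2 d2" "on_line v4 d2"
  unfolding diag1_def diag2_def using line_through_props v13 v24 by blast+

lemma d12: "d1 \<noteq> d2"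
proof
  assume e: "d1 = d2"
  have on: "on_line v1 d1" "on_line v2 d1" "on_line v3 d1" "on_line v4 d1" using diag_props e by auto
  have u: "L = d1" if "is_line L" "on_line p L" "on_line q L" "p \<noteq> q" "on_line p d1" "on_line q d1" for L p q
    using line_unique2[OF that(1) diag_props(1) that(4) that(2,3,5,6)] .
  have "v1 = v2 \<or> v1 = v4"
  proof (rule ccontr)
    assume "\<not> (v1 = v2 \<or> v1 = v4)"
    hence "A = d1" "B = d1" using u[OF lines(1) vert_on(1) vert_on(8)] u[OF lines(2) vert_on(2) vert_on(3)] on by auto
    thus False using dist by simp
  qed
  thus False
  proof
    assume e12: "v1 = v2"
    have "v1 \<noteq> v4" using e12 vert_on nconc by metis
    have "v3 \<noteq> v4"
    proof
      assume "v3 = v4"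
      hence "A = A'" using line_unique2[OF lines(1) lines(3) v13] vert_on e12 by metis
      thus False using dist by simp
    qed
    have "A = d1" using u[OF lines(1) vert_on(1) vert_on(8) \<open>v1 \<noteq> v4\<close>] on by auto
    moreover have "B' = d1" using u[OF lines(4) vert_on(6) vert_on(7) \<open>v3 \<noteq> v4\<close>] on by auto
    ultimately show False using dist by simp
  next
    assume e14: "v1 = v4"
    have "v1 \<noteq> v2" using e14 vert_on nconc by metis
    have "v2 \<noteq> v3"
    proof
      assume "v2 = v3"
      hence "B = B'" using line_unique2[OF lines(2) lines(4) \<open>v1 \<noteq> v2\<close>] vert_on e14 by metis
      thus False using dist by simp
    qed
    have "B = d1" using u[OF lines(2) vert_on(2) vert_on(3) \<open>v1 \<noteq> v2\<close>] on by auto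
    moreover have "A' = d1" using u[OF lines(3) vert_on(4) vert_on(5) \<open>v2 \<noteq> v3\<close>] on by auto
    ultimately show False using dist by simp
  qed
qed

lemma sd_diag_iff: "same_dir d1 d2 \<longleftrightarrow> dl = 0"
  using sd_iff[OF diag_props(1,4)] sd_dir[OF diag_props(1-3) v13 diag_props(4-6) v24] by simp

lemma par_diag_iff: "parallel d1 d2 \<longleftrightarrow> dl = 0"
  using sd_diag_iff d12 unfolding parallel_def same_dir_def by blast

lemma par_AA_iff: "parallel A A' \<longleftrightarrow> DD A A' = 0"
  using sd_iff[OF lines(1,3)] dist unfolding parallel_def same_dir_def by blast

lemma par_BB_iff: "parallel B B' \<longleftrightarrow> DD B B' = 0"
  using sd_iff[OF lines(2,4)] dist unfolding parallel_def same_dir_def by blast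

lemma Psi_zero_pair1: "fv A p = 0 \<Longrightarrow> fv A' p = 0 \<Longrightarrow> Psi A B A' B' p = 0"
  unfolding Psi_def WA_def WB_def by simp

lemma Psi_zero_pair2: "fv B p = 0 \<Longrightarrow> fv B' p = 0 \<Longrightarrow> Psi A B A' B' p = 0"
  unfolding Psi_def WA_def WB_def by simp

lemma Psi_diag_meet:
  assumes "\<not> same_dir d1 d2"
  shows "Psi A B A' B' (meet d1 d2) = 0"
proof -
  define p where "p = meet d1 d2"
  have nz: "DD d1 d2 \<noteq> 0" using assms sd_iff diag_props by blast
  have p1: "on_line p d1" and p2: "on_line p d2" using meet_on[OF nz] unfolding p_def by auto
  obtain s where s: "p = (fst v1 + s * (fst v3 - fst v1), snd v1 + s * (snd v3 - snd v1))"
    using line_pts_on[OF diag_props(1) v13 diag_props(2,3)] p1 unfolding line_pts_def by blast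
  obtain r where r: "p = (fst v2 + r * (fst v4 - fst v2), snd v2 + r * (snd v4 - snd v2))"
    using line_pts_on[OF diag_props(4) v24 diag_props(5,6)] p2 unfolding line_pts_def by blast
  have fs: "fv L p = fv L v1 + s * (fv L v3 - fv L v1)" for L using fv_affine s by metis
  have fr: "fv L p = fv L v2 + r * (fv L v4 - fv L v2)" for L using fv_affine r by metis
  have "fv A p * fv B p * D3 - fv A p * fv B' p * D2 - fv A' p * fv B p * D4 + fv A' p * fv B' p * D1 = 0"
  proof (rule atom_K4[OF Dnz])
    show "fv A p = s * (dc / D3)" using fs[of A] vf by simp
    show "fv A p = da / D2 - r * (da / D2)" using fr[of A] vf by simp
    show "fv A' p = da / D1 - s * (da / D1)" using fs[of A'] vf by simp
    show "fv A' p = r * (dc / D4)" using fr[of A'] vf by simp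
    show "fv B p = s * (db / D3)" using fs[of B] vf by simp
    show "fv B p = r * (dd / D4)" using fr[of B] vf by simp
    show "fv B' p = dd / D1 - s * (dd / D1)" using fs[of B'] vf by simp
    show "fv B' p = db / D2 - r * (db / D2)" using fr[of B'] vf by simp
  qed
  thus ?thesis unfolding p_def Psi_Qf Qf_def .
qed

lemma Psi_diag_point:
  assumes "is_finite_diag_point A B A' B' p"
  shows "Psi A B A' B' p = 0"
proof -
  consider "\<not> same_dir A A'" "p = meet A A'" | "\<not> same_dir B B'" "p = meet B B'"
    | "\<not> same_dir d1 d2" "p = meet d1 d2"
    using assms unfolding is_finite_diag_point_def by blast
  then show ?thesis
  proof cases
    case 1
    hence "DD A A' \<noteq> 0" using sd_iff lines by blast
    thus ?thesis using 1 meet_on Psi_zero_pair1 unfolding on_line_fv by metis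
  next
    case 2
    hence "DD B B' \<noteq> 0" using sd_iff lines by blast
    thus ?thesis using 2 meet_on Psi_zero_pair2 unfolding on_line_fv by metis
  next
    case 3 thus ?thesis using Psi_diag_meet by simp
  qed
qed

lemma c_zero_iff:
  assumes "is_finite_diag_point A B A' B' p"
  shows "PhiQ A B A' B' (fst p - fst cen) (snd p - snd cen) = 0 \<longleftrightarrow>
     parallel A A' \<or> parallel B B' \<or> parallel d1 d2"
proof -
  have "(16::'a) = 4 * 4" by simp
  hence "(16::'a) \<noteq> 0" using two16 by (metis mult_eq_0_iff)
  thus ?thesis using c_formula[OF Psi_diag_point[OF assms]] par_diag_iff par_AA_iff par_BB_iff
    by (metis mult_eq_0_iff)
qed

end

lemma conic_factor_zero:
  fixes g bb a h k :: "'b::alg_closed_field"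
  shows "\<exists>p1 q1 r1 p2 q2 r2. \<forall>x y. g*(x-h)^2 - 2*bb*(x-h)*(y-k) + a*(y-k)^2 - 0 = (p1*x+q1*y+r1)*(p2*x+q2*y+r2)"
proof (cases "g = 0")
  case True
  show ?thesis
    by (rule exI[of _ 0], rule exI[of _ 1], rule exI[of _ "-k"], rule exI[of _ "-2*bb"], rule exI[of _ a],
        rule exI[of _ "2*bb*h - a*k"]) (simp add: True algebra_simps power2_eq_square)
next
  case False
  obtain s where s: "s ^ 2 = bb^2 - a * g" using nth_root_exists[of 2 "bb^2 - a * g"] by auto
  define c1 where "c1 = (bb+s)/g"
  show ?thesis
  proof (rule exI[of _ 1], rule exI[of _ "-c1"], rule exI[of _ "-h + c1*k"],
      rule exI[of _ g], rule exI[of _ "-(bb-s)"], rule exI[of _ "-g*h + (bb-s)*k"], intro allI)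
    fix x y :: 'b
    have "(1*x + -c1*y + (-h + c1*k)) * (g*x + -(bb-s)*y + (-g*h + (bb-s)*k))
        = ((x - h) - c1*(y - k)) * (g*(x-h) - (bb-s)*(y-k))"
      by (simp add: algebra_simps)
    also have "(x - h) - c1*(y - k) = (g*(x - h) - (bb+s)*(y - k)) / g"
      using False unfolding c1_def by (simp add: field_simps)
    also have "(g*(x - h) - (bb+s)*(y - k)) / g * (g*(x-h) - (bb-s)*(y-k)) = (g*(x - h) - (bb+s)*(y - k)) * (g*(x-h) - (bb-s)*(y-k)) / g"
      by simp
    also have "(g*(x - h) - (bb+s)*(y - k)) * (g*(x-h) - (bb-s)*(y-k))
        = g * (g*(x-h)^2 - 2*bb*(x-h)*(y-k)) + (bb^2 - s^2) * (y-k)^2"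
      by (simp add: algebra_simps power2_eq_square)
    also have "\<dots> = g * (g*(x-h)^2 - 2*bb*(x-h)*(y-k) + a*(y-k)^2)" unfolding s by (simp add: algebra_simps)
    finally show "g*(x-h)^2 - 2*bb*(x-h)*(y-k) + a*(y-k)^2 - 0 = (1*x + -c1*y + (-h + c1*k)) * (g*x + -(bb-s)*y + (-g*h + (bb-s)*k))"
      using False by simp
  qed
qed

lemma conic_factor_nec:
  fixes g bb a h k cc :: "'b::field"
  assumes two: "(2::'b) \<noteq> 0" and disc: "a * g - bb^2 \<noteq> 0"
    and f: "\<forall>x y. g*(x-h)^2 - 2*bb*(x-h)*(y-k) + a*(y-k)^2 - cc = (p1*x+q1*y+r1)*(p2*x+q2*y+r2)"
  shows "cc = 0"
proof (rule ccontr)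
  assume cc: "cc \<noteq> 0"
  define R1 where "R1 = p1*h + q1*k + r1"
  define R2 where "R2 = p2*h + q2*k + r2"
  have F: "g*xx^2 - 2*bb*xx*yy + a*yy^2 - cc = (p1*xx+q1*yy+R1)*(p2*xx+q2*yy+R2)" for xx yy
    using f[rule_format, of "xx+h" "yy+k"] unfolding R1_def R2_def by (simp add: algebra_simps)
  have e0: "- cc = R1 * R2" using F[of 0 0] by simp
  have e1: "g - cc = (p1 + R1) * (p2 + R2)" using F[of 1 0] by simp
  have e2: "g - cc = (R1 - p1) * (R2 - p2)" using F[of "-1" 0] by (simp add: algebra_simps)
  have e3: "a - cc = (q1 + R1) * (q2 + R2)" using F[of 0 1] by simp
  have e4: "a - cc = (R1 - q1) * (R2 - q2)" using F[of 0 "-1"] by (simp add: algebra_simps)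
  have e5: "g - 2*bb + a - cc = (p1+q1+R1) * (p2+q2+R2)" using F[of 1 1] by simp
  have "2 * (p1*R2 + p2*R1) = 0" using e1 e2 by (simp add: algebra_simps)
  hence z1: "p1*R2 + p2*R1 = 0" using two by (metis mult_eq_0_iff)
  have "2 * (q1*R2 + q2*R1) = 0" using e3 e4 by (simp add: algebra_simps)
  hence z2: "q1*R2 + q2*R1 = 0" using two by (metis mult_eq_0_iff)
  have "g - cc = p1*p2 + (p1*R2 + p2*R1) + R1*R2" using e1 by (simp add: algebra_simps)
  hence "g - cc = p1*p2 + 0 + - cc" using e0 unfolding z1 by simp
  hence g: "g = p1 * p2" by simp
  have "a - cc = q1*q2 + (q1*R2 + q2*R1) + R1*R2" using e3 by (simp add: algebra_simps)
  hence "a - cc = q1*q2 + 0 + - cc" using e0 unfolding z2 by simp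
  hence a: "a = q1 * q2" by simp
  have "g - 2*bb + a - cc = p1*p2 + q1*q2 + R1*R2 + (p1*q2 + p2*q1) + (p1*R2 + p2*R1) + (q1*R2 + q2*R1)"
    using e5 by (simp add: algebra_simps)
  hence "g - 2*bb + a - cc = g + a + - cc + (p1*q2 + p2*q1) + 0 + 0"
    unfolding z1 z2 e0[symmetric] g a .
  hence "(p1*q2 + p2*q1) + 2*bb = 0" by (simp add: algebra_simps)
  hence b: "- 2*bb = p1*q2 + p2*q1" unfolding add_eq_0_iff2 by simp
  have R2: "R2 \<noteq> 0" using e0 cc by auto
  have "(p1*q2 - p2*q1) * R2 = q2 * (p1*R2 + p2*R1) - p2 * (q1*R2 + q2*R1)" by (simp add: algebra_simps)
  hence "(p1*q2 - p2*q1) * R2 = 0" using z1 z2 by simp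
  hence pq: "p1*q2 = p2*q1" using R2 by simp
  have "4 * (a * g - bb^2) = 4 * (q1*q2) * (p1*p2) - (- 2*bb)^2" by (simp add: a g power2_eq_square algebra_simps)
  also have "\<dots> = - ((p1*q2 - p2*q1)^2)" unfolding b by (simp add: algebra_simps power2_eq_square)
  also have "\<dots> = 0" using pq by simp
  finally have "4 * (a * g - bb^2) = 0" .
  moreover have "(4::'b) \<noteq> 0" using two4[OF two] .
  ultimately show False using disc by simp
qed

context quad begin

lemma degenerate_iff:
  assumes dp: "is_finite_diag_point A B A' B' p"
  shows "conic_degenerate A B A' B' p \<longleftrightarrow> parallel A A' \<or> parallel B B' \<or> parallel d1 d2"
proof -
  define cc where "cc = PhiQ A B A' B' (fst p - fst cen) (snd p - snd cen)"
  have two': "(2::'a alg_closure) \<noteq> 0"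
  proof
    assume "(2::'a alg_closure) = 0"
    hence "to_ac (2::'a) = 0" using to_ac_numeral[of "num.Bit0 num.One"] by simp
    hence "(2::'a) = 0" by (simp only: to_ac_eq_0_iff)
    thus False using two by simp
  qed
  have "alphaQ A B A' B' * gammaQ A B A' B' - betaQ A B A' B' ^ 2 \<noteq> 0"
    unfolding disc_id using Dnz by simp
  hence disc': "to_ac (alphaQ A B A' B') * to_ac (gammaQ A B A' B') - to_ac (betaQ A B A' B') ^ 2 \<noteq> 0"
    by (metis to_ac_diff to_ac_eq_0_iff to_ac_mult to_ac_power)
  have "conic_degenerate A B A' B' p \<longleftrightarrow> cc = 0"
  proof
    assume "conic_degenerate A B A' B' p"
    then obtain p1 q1 r1 p2 q2 r2 :: "'a alg_closure" where
      f: "\<forall>x y. to_ac (gammaQ A B A' B') * (x - to_ac (fst cen))^2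
         - 2 * to_ac (betaQ A B A' B') * (x - to_ac (fst cen)) * (y - to_ac (snd cen))
         + to_ac (alphaQ A B A' B') * (y - to_ac (snd cen))^2 - to_ac cc
         = (p1*x+q1*y+r1)*(p2*x+q2*y+r2)"
      unfolding conic_degenerate_def Let_def cc_def by blast
    have "to_ac cc = 0" by (rule conic_factor_nec[OF two' disc' f])
    thus "cc = 0" by simp
  next
    assume "cc = 0"
    thus "conic_degenerate A B A' B' p"
      unfolding conic_degenerate_def Let_def cc_def[symmetric] using conic_factor_zero by simp
  qed
  also have "cc = 0 \<longleftrightarrow> parallel A A' \<or> parallel B B' \<or> parallel d1 d2"
    unfolding cc_def by (rule c_zero_iff[OF dp])
  finally show ?thesis .
qed

end

lemma exists_on_line: assumes "is_line L" shows "\<exists>p. on_line p L"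
proof -
  from assms consider "uL L = 0" "tL L = 1" | "uL L = 1" unfolding is_line_def by blast
  then show ?thesis
  proof cases
    case 1 then show ?thesis by (intro exI[of _ "(- vL L, 0)"]) (simp add: on_line_def)
  next
    case 2 then show ?thesis by (intro exI[of _ "(0, vL L)"]) (simp add: on_line_def)
  qed
qed

lemma midline_iff:
  fixes L M :: "'a::field line"
  assumes two: "(2::'a) \<noteq> 0" and L: "is_line L" and sd: "same_dir L M"
  shows "m \<in> midline L M \<longleftrightarrow> fv L m + fv M m = 0"
proof
  assume "m \<in> midline L M"
  then obtain p q where pq: "m = midpt p q" "on_line p L" "on_line q M" unfolding midline_def by blast
  have t: "tL M = tL L" "uL M = uL L" using sd unfolding same_dir_def by auto
  have "(fv L m + fv M m) * 2 = fv L p + fv L q + (fv M p + fv M q)"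
    using fv_midpt[OF two, of L p q] fv_midpt[OF two, of M p q] unfolding pq(1) by (simp add: algebra_simps)
  also have "\<dots> = 2 * (fv L p + fv M q)" unfolding fv_def t by (simp add: algebra_simps)
  also have "\<dots> = 0" using pq(2,3) unfolding on_line_fv by simp
  finally have "(fv L m + fv M m) * 2 = 0" .
  thus "fv L m + fv M m = 0" using two by (metis mult_eq_0_iff)
next
  assume z: "fv L m + fv M m = 0"
  obtain p where p: "on_line p L" using exists_on_line[OF L] by blast
  define q where "q = (2 * fst m - fst p, 2 * snd m - snd p)"
  have t: "tL M = tL L" "uL M = uL L" using sd unfolding same_dir_def by auto
  have "fv M q = fv L m + fv M m - fv L p" unfolding q_def fv_def t by (simp add: algebra_simps)
  hence "on_line q M" using z p unfolding on_line_fv by simp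
  moreover have "midpt p q = m" unfolding q_def midpt_def using two by (cases m) (simp add: add_divide_distrib)
  ultimately show "m \<in> midline L M" using p unfolding midline_def by blast
qed

lemma colin:
  fixes w e :: "'a::field pt"
  assumes "det2 w e = 0" "e \<noteq> (0, 0)"
  shows "\<exists>s. w = (s * fst e, s * snd e)"
proof (cases "fst e = 0")
  case False
  have "snd w = fst w / fst e * snd e" using assms(1) False unfolding det2_def by (simp add: field_simps)
  thus ?thesis using False by (intro exI[of _ "fst w / fst e"]) (cases w, simp)
next
  case True
  hence s: "snd e \<noteq> 0" using assms(2) by (cases e) auto
  have "fst w = 0" using assms(1) True s unfolding det2_def by simp
  thus ?thesis using True s by (intro exI[of _ "snd w / snd e"]) (cases w, simp)
qed

lemma affine_zero_set:
  fixes hf :: "'a::field pt \<Rightarrow> 'a"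
  assumes hf: "\<And>m. hf m = k1 * fst m + k2 * snd m + k0" and k: "k1 \<noteq> 0 \<or> k2 \<noteq> 0"
    and p: "hf p = 0" and q: "hf q = 0" and pq: "p \<noteq> q"
  shows "hf m = 0 \<longleftrightarrow> m \<in> line_pts p q"
proof
  assume z: "hf m = 0"
  have "(fst m - fst p) * k1 - (snd m - snd p) * (- k2) = hf m - hf p" unfolding hf by (simp add: algebra_simps)
  hence a1: "(fst m - fst p) * k1 - (snd m - snd p) * (- k2) = 0" using z p by simp
  have "(fst q - fst p) * k1 - (snd q - snd p) * (- k2) = hf q - hf p" unfolding hf by (simp add: algebra_simps)
  hence a2: "(fst q - fst p) * k1 - (snd q - snd p) * (- k2) = 0" using q p by simp
  have "(fst m - fst p) * (snd q - snd p) - (snd m - snd p) * (fst q - fst p) = 0"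
    using Psi_zero_dir[OF a1 a2] k by simp
  hence "det2 (psub m p) (psub q p) = 0" unfolding det2_def psub_def by simp
  moreover have "psub q p \<noteq> (0, 0)" using pq unfolding psub_def by (cases p; cases q) auto
  ultimately obtain s where "psub m p = (s * fst (psub q p), s * snd (psub q p))" using colin by blast
  hence "m = (fst p + s * (fst q - fst p), snd p + s * (snd q - snd p))"
    unfolding psub_def by (cases m) (simp add: algebra_simps)
  thus "m \<in> line_pts p q" unfolding line_pts_def by blast
next
  assume "m \<in> line_pts p q"
  then obtain s where m: "m = (fst p + s * (fst q - fst p), snd p + s * (snd q - snd p))" unfolding line_pts_def by blast
  have "hf m = (1 - s) * hf p + s * hf q" unfolding m hf by (simp add: algebra_simps)
  thus "hf m = 0" using p q by simp
qed

lemma on_line_det: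
  assumes "is_line L" "on_line p L" "on_line q L" "p \<noteq> q"
  shows "fv L x = 0 \<longleftrightarrow> det2 (psub x p) (psub q p) = 0"
proof -
  obtain l where l: "fst q - fst p = l * uL L" "snd q - snd p = l * tL L" using dir_param[OF assms(1-3)] by blast
  have l0: "l \<noteq> 0" using l assms(4) by (cases p; cases q) auto
  have "det2 (psub x p) (psub q p) = l * (fv L x - fv L p)"
    unfolding det2_def psub_def fv_def l by (simp add: algebra_simps)
  thus ?thesis using assms(2) l0 unfolding on_line_fv by simp
qed

lemma PhiQ_quad:
  fixes al be ga :: "'a::field"
  assumes two: "(2::'a) \<noteq> 0" and disc: "al * ga - be^2 \<noteq> 0"
    and e1: "ga * fst e^2 - 2 * be * fst e * snd e + al * snd e^2 = 0"
    and e2: "ga * fst f^2 - 2 * be * fst f * snd f + al * snd f^2 = 0"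
    and ef: "det2 e f \<noteq> 0"
  shows "ga * fst w^2 - 2 * be * fst w * snd w + al * snd w^2 = 0 \<longleftrightarrow> det2 w f = 0 \<or> det2 e w = 0"
proof -
  define Ph where "Ph = (\<lambda>w::'a pt. ga * fst w^2 - 2 * be * fst w * snd w + al * snd w^2)"
  define Bf where "Bf = ga * fst e * fst f - be * (fst e * snd f + snd e * fst f) + al * snd e * snd f"
  define dt where "dt = det2 e f"
  have exp: "Ph (x * fst e + y * fst f, x * snd e + y * snd f) = x^2 * Ph e + 2 * x * y * Bf + y^2 * Ph f" for x y
    unfolding Ph_def Bf_def by (simp add: algebra_simps power2_eq_square)
  have cr: "v = (det2 v f / dt * fst e + det2 e v / dt * fst f, det2 v f / dt * snd e + det2 e v / dt * snd f)" for v
  proof -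
    have "det2 v f * fst e + det2 e v * fst f = dt * fst v" "det2 v f * snd e + det2 e v * snd f = dt * snd v"
      unfolding dt_def det2_def by (simp_all add: algebra_simps)
    thus ?thesis using ef unfolding dt_def[symmetric] by (cases v) (simp add: field_simps)
  qed
  have Pe: "Ph e = 0" "Ph f = 0" unfolding Ph_def using e1 e2 by auto
  have P: "Ph v = 2 * (det2 v f / dt) * (det2 e v / dt) * Bf" for v
  proof -
    have "Ph v = Ph (det2 v f / dt * fst e + det2 e v / dt * fst f, det2 v f / dt * snd e + det2 e v / dt * snd f)"
      by (rule arg_cong[where f=Ph, OF cr])
    also have "\<dots> = (det2 v f / dt)^2 * Ph e + 2 * (det2 v f / dt) * (det2 e v / dt) * Bf + (det2 e v / dt)^2 * Ph f"
      by (rule exp)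
    finally show ?thesis using Pe by simp
  qed
  have B: "Bf \<noteq> 0"
  proof
    assume B0: "Bf = 0"
    hence "Ph v = 0" for v using P by simp
    from this[of "(1,0)"] this[of "(0,1)"] this[of "(1,1)"]
    have "ga = 0" "al = 0" "ga - 2 * be + al = 0" unfolding Ph_def by simp_all
    hence "2 * be = 0" by simp
    hence "be = 0" using two by simp
    thus False using disc \<open>ga = 0\<close> by simp
  qed
  have "Ph w = 0 \<longleftrightarrow> det2 w f = 0 \<or> det2 e w = 0"
    using P[of w] B two ef unfolding dt_def by simp
  thus ?thesis unfolding Ph_def .
qed

lemma fv_midpt2: fixes L :: "'a::field line" assumes "(2::'a) \<noteq> 0"
  shows "fv L (midpt p q) = (fv L p + fv L q) / 2"
  using fv_midpt[OF assms, of L p q] assms by (simp add: eq_divide_eq)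

context quad begin

lemma partA:
  assumes par: "parallel A A'"
  shows "bisector_locus A B A' B' = midline A A' \<union> line_pts (midA A B A' B') (midA' A B A' B')"
proof -
  have t: "tL A' = tL A" "uL A' = uL A" and vne: "vL A \<noteq> vL A'"
    using par unfolding parallel_def same_dir_def line_eq_iff by auto
  define hA where "hA = (\<lambda>m. fv B m * DD A B' + fv B' m * DD A B)"
  have Psi_fact: "Psi A B A' B' m = (fv A m + fv A' m) * hA m" for m
    unfolding Psi_def WA_def WB_def hA_def DD_def t by (simp add: algebra_simps)
  define k1 where "k1 = tL B * DD A B' + tL B' * DD A B"
  define k2 where "k2 = - (uL B * DD A B' + uL B' * DD A B)"
  define k0 where "k0 = vL B * DD A B' + vL B' * DD A B"
  have hrep: "hA m = k1 * fst m + k2 * snd m + k0" for m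
    unfolding hA_def k1_def k2_def k0_def fv_def by (simp add: algebra_simps)
  have "uL A * k1 + tL A * k2 = - 2 * DD A B * DD A B'"
    unfolding k1_def k2_def DD_def by (simp add: algebra_simps)
  moreover have "DD A B' \<noteq> 0" using Dnz(4) DD_swap[of A B'] by simp
  ultimately have knz: "k1 \<noteq> 0 \<or> k2 \<noteq> 0" using Dnz(1) two by auto
  have DA: "DD A B = - D2" "DD A B' = D3"
    using DD_swap[of B A'] unfolding DD_def t by (simp_all add: algebra_simps)
  have h1: "hA (midA A B A' B') = 0"
  proof -
    have "hA (midA A B A' B') = (hA v1 + hA v4) / 2"
      unfolding midA_def hA_def fv_midpt2[OF two] using two16 two by (simp add: field_simps)
    also have "hA v1 + hA v4 = dd / D1 * D1 + dd / D4 * DD A B'"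
      unfolding hA_def vf by simp
    also have "\<dots> = 0" using Dnz DD_swap[of A B'] by simp
    finally show ?thesis by simp
  qed
  have h2: "hA (midA' A B A' B') = 0"
  proof -
    have "hA (midA' A B A' B') = (hA v2 + hA v3) / 2"
      unfolding midA'_def hA_def fv_midpt2[OF two] using two16 two by (simp add: field_simps)
    also have "hA v2 + hA v3 = db / D2 * DD A B + db / D3 * DD A B'"
      unfolding hA_def vf by simp
    also have "\<dots> = 0" unfolding DA using Dnz by simp
    finally show ?thesis by simp
  qed
  have fa1: "fv A (midA A B A' B') = 0"
    unfolding midA_def fv_midpt2[OF two] vf by simp
  have fa2: "fv A (midA' A B A' B') = vL A - vL A'"
  proof -
    have "fv A (midA' A B A' B') = fv A' (midA' A B A' B') + (vL A - vL A')"
      unfolding fv_def t by simp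
    moreover have "fv A' (midA' A B A' B') = 0" unfolding midA'_def fv_midpt2[OF two] vf by simp
    ultimately show ?thesis by simp
  qed
  have mne: "midA A B A' B' \<noteq> midA' A B A' B'" using fa1 fa2 vne by auto
  have sdA: "same_dir A A'" using t unfolding same_dir_def by simp
  have key: "m \<in> bisector_locus A B A' B' \<longleftrightarrow> m \<in> midline A A' \<union> line_pts (midA A B A' B') (midA' A B A' B')" for m
  proof -
    have "m \<in> bisector_locus A B A' B' \<longleftrightarrow> (fv A m + fv A' m) * hA m = 0"
      using locus_iff Psi_fact by simp
    also have "\<dots> \<longleftrightarrow> fv A m + fv A' m = 0 \<or> hA m = 0" by simp
    also have "\<dots> \<longleftrightarrow> m \<in> midline A A' \<or> m \<in> line_pts (midA A B A' B') (midA' A B A' B')"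
      using midline_iff[OF two lines(1) sdA] affine_zero_set[OF hrep knz h1 h2 mne] by simp
    finally show ?thesis by simp
  qed
  show ?thesis using key by blast
qed

end

lemma lf_psub: "lf L (psub p q) = fv L p - fv L q"
  unfolding lf_def psub_def fv_def by (simp add: algebra_simps)

lemma PhiQ_scale: "PhiQ A B A' B' (c * x) (c * y) = c^2 * PhiQ A B A' B' x y"
  unfolding PhiQ_def by (simp add: algebra_simps power2_eq_square)

lemma atom_e1:
  fixes a b c d D1 D2 D3 D4 :: "'a::field"
  assumes "D1 \<noteq> 0" "D2 \<noteq> 0" "D3 \<noteq> 0" "D4 \<noteq> 0"
  shows "((0 - a/D2) * (d/D4 - 0) * D3 - (0 - a/D2) * (0 - b/D2) * D2 - (c/D4 - 0) * (d/D4 - 0) * D4 + (c/D4 - 0) * (0 - b/D2) * D1) * (D2 * D4)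
    = - (a*d*D3 + a*b*D4 + c*d*D2 + b*c*D1)"
  using assms by (simp add: field_simps)

lemma atom_e2:
  fixes a b c d D1 D2 D3 D4 :: "'a::field"
  assumes "D1 \<noteq> 0" "D2 \<noteq> 0" "D3 \<noteq> 0" "D4 \<noteq> 0" "k \<noteq> 0"
  shows "(((0 + c/D3)/k) * ((0 + b/D3)/k) * D3 - ((0 + c/D3)/k) * ((d/D1 + 0)/k) * D2 - ((a/D1 + 0)/k) * ((0 + b/D3)/k) * D4 + ((a/D1 + 0)/k) * ((d/D1 + 0)/k) * D1) * (k * k * D1 * D3)
    = (b*c*D1 + a*d*D3 - c*d*D2 - a*b*D4)"
  using assms by (simp add: field_simps)

context quad begin

abbreviation "mD1 \<equiv> midD1 A B A' B'"
abbreviation "mD2 \<equiv> midD2 A B A' B'"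

lemma partD:
  assumes par: "parallel d1 d2"
  shows "bisector_locus A B A' B' = midline d1 d2 \<union> line_pts mD1 mD2"
proof -
  have dl0: "dl = 0" using par par_diag_iff by simp
  have "- (da * db * D4 + dc * dd * D2) = 0" using delta_eq dl0 by simp
  hence H: "da * db * D4 + dc * dd * D2 = 0" by (simp only: neg_equal_0_iff_equal)
  have H2: "da*dd*D3 + da*db*D4 + dc*dd*D2 + db*dc*D1 = 0"
    using H half_id[of A B A' B'] by (simp add: algebra_simps)
  have H3: "db*dc*D1 + da*dd*D3 - dc*dd*D2 - da*db*D4 = 0"
    using half_id[of A B A' B'] by (simp add: algebra_simps)
  have "(16::'a) = 4 * 4" by simp
  hence n16: "(16::'a) \<noteq> 0" using two16 by (metis mult_eq_0_iff)
  have "Psi A B A' B' cen * (16 * (D1 * D2 * D3 * D4)) = 0" using Psi_cen H by simp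
  hence Pc: "Psi A B A' B' cen = 0" using n16 Dnz by simp
  have PsiM: "Psi A B A' B' m = 2 * PhiQ A B A' B' (fst (psub m cen)) (snd (psub m cen))" for m
    using Psi_expand[of m] Pc unfolding psub_def by simp
  define e1 where "e1 = psub v4 v2"
  define e2 where "e2 = psub mD2 mD1"
  have Phe1: "PhiQ A B A' B' (fst e1) (snd e1) = 0"
  proof -
    have "2 * PhiQ A B A' B' (fst e1) (snd e1) = Qf A B A' B' (lf A e1) (lf A' e1) (lf B e1) (lf B' e1)"
      using Qf_lf by metis
    also have "\<dots> = (0 - da/D2) * (dd/D4 - 0) * D3 - (0 - da/D2) * (0 - db/D2) * D2 - (dc/D4 - 0) * (dd/D4 - 0) * D4 + (dc/D4 - 0) * (0 - db/D2) * D1"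
      unfolding Qf_def e1_def lf_psub vf ..
    finally have "2 * PhiQ A B A' B' (fst e1) (snd e1) * (D2 * D4) = - (da*dd*D3 + da*db*D4 + dc*dd*D2 + db*dc*D1)"
      using atom_e1[OF Dnz] by simp
    thus ?thesis using H2 Dnz two by simp
  qed
  have Phe2: "PhiQ A B A' B' (fst e2) (snd e2) = 0"
  proof -
    have fm: "fv L mD1 = (fv L v1 + fv L v3) / 2" for L unfolding midD1_def fv_midpt2[OF two] ..
    have "Psi A B A' B' mD1 * (2 * 2 * D1 * D3) = db*dc*D1 + da*dd*D3 - dc*dd*D2 - da*db*D4"
      unfolding Psi_Qf Qf_def fm vf by (rule atom_e2[OF Dnz two])
    hence "Psi A B A' B' mD1 = 0" using H3 Dnz two two16 by simp
    hence z: "PhiQ A B A' B' (fst (psub mD1 cen)) (snd (psub mD1 cen)) = 0" using PsiM[of mD1] two by simp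
    have "psub mD1 cen = ((- 1/2) * fst e2, (- 1/2) * snd e2)"
      unfolding e2_def psub_def centroid_def midpt_def using two two16 by (simp add: field_simps)
    hence "PhiQ A B A' B' (fst (psub mD1 cen)) (snd (psub mD1 cen)) = (- 1/2)^2 * PhiQ A B A' B' (fst e2) (snd e2)"
      by (simp only: fst_conv snd_conv PhiQ_scale)
    thus ?thesis using z two by simp
  qed
  have v1d2: "fv d2 v1 \<noteq> 0"
  proof
    assume "fv d2 v1 = 0"
    hence "d1 = d2" using line_eqI[of d1 d2 v1] par diag_props(2) unfolding parallel_def same_dir_def on_line_fv by blast
    thus False using par unfolding parallel_def by blast
  qed
  have "det2 (psub v1 v2) (psub v4 v2) \<noteq> 0" using on_line_det[OF diag_props(4,5,6) v24] v1d2 by simp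
  moreover have "det2 e1 e2 * 2 = 2 * det2 (psub v1 v2) (psub v4 v2) + dl"
  proof -
    define E1 where "E1 = fst v2 + fst v4 - fst v1 - fst v3"
    define E2 where "E2 = snd v2 + snd v4 - snd v1 - snd v3"
    have "e2 = (E1 / 2, E2 / 2)" unfolding e2_def E1_def E2_def psub_def midD1_def midD2_def midpt_def
      using two by (simp add: diff_divide_distrib add_divide_distrib)
    hence "det2 e1 e2 * 2 = det2 e1 (E1, E2)" unfolding det2_def using two by (simp add: field_simps)
    also have "\<dots> = 2 * det2 (psub v1 v2) (psub v4 v2) + dl"
      unfolding e1_def E1_def E2_def det2_def psub_def by (simp add: algebra_simps)
    finally show ?thesis .
  qed
  ultimately have e12: "det2 e1 e2 \<noteq> 0" using dl0 two by auto
  have disc: "alphaQ A B A' B' * gammaQ A B A' B' - betaQ A B A' B'^2 \<noteq> 0"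
    unfolding disc_id using Dnz by simp
  have Q: "PhiQ A B A' B' (fst w) (snd w) = 0 \<longleftrightarrow> det2 w e2 = 0 \<or> det2 e1 w = 0" for w
    using PhiQ_quad[OF two disc _ _ e12] Phe1 Phe2 unfolding PhiQ_def by blast
  have sd12: "same_dir d1 d2" using par unfolding parallel_def same_dir_def by blast
  have t12: "tL d1 = tL d2" "uL d1 = uL d2" using sd12 unfolding same_dir_def by auto
  obtain lam where lam: "fst v4 - fst v2 = lam * uL d2" "snd v4 - snd v2 = lam * tL d2"
    using dir_param[OF diag_props(4,5,6)] by blast
  have lam0: "lam \<noteq> 0" using lam v24 by (cases v2; cases v4) auto
  have fm1: "fv d1 mD1 = 0" unfolding midD1_def using midpt_on[OF two diag_props(2,3)] on_line_fv by blast
  have fm2: "fv d2 mD2 = 0" unfolding midD2_def using midpt_on[OF two diag_props(5,6)] on_line_fv by blast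
  have fcen: "fv d1 cen + fv d2 cen = 0"
  proof -
    have "(fv d1 cen + fv d2 cen) * 2 = fv d1 mD1 + fv d2 mD2 + (fv d1 mD2 + fv d2 mD1)"
      unfolding centroid_def using fv_midpt[OF two, of d1 mD1 mD2] fv_midpt[OF two, of d2 mD1 mD2]
      by (simp add: algebra_simps)
    also have "fv d1 mD2 + fv d2 mD1 = fv d2 mD2 + fv d1 mD1" unfolding fv_def t12 by (simp add: algebra_simps)
    finally have "(fv d1 cen + fv d2 cen) * 2 = 0" using fm1 fm2 by simp
    thus ?thesis using two by (metis mult_eq_0_iff)
  qed
  have midl: "m \<in> midline d1 d2 \<longleftrightarrow> det2 e1 (psub m cen) = 0" for m
  proof -
    have "fv d1 m + fv d2 m = (fv d1 cen + fv d2 cen) + 2 * lf d2 (psub m cen)"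
      unfolding fv_def lf_def psub_def t12 by (simp add: algebra_simps)
    hence a: "fv d1 m + fv d2 m = 2 * lf d2 (psub m cen)" using fcen by simp
    have b: "det2 e1 (psub m cen) = - lam * lf d2 (psub m cen)"
      unfolding e1_def det2_def psub_def lf_def lam[unfolded psub_def] by (simp add: psub_def lam algebra_simps)
    show ?thesis using midline_iff[OF two diag_props(1) sd12, of m] a b lam0 two by auto
  qed
  have e2nz: "snd e2 \<noteq> 0 \<or> - fst e2 \<noteq> 0" using e12 unfolding det2_def by auto
  define hf where "hf = (\<lambda>m. det2 (psub m cen) e2)"
  have hrep: "hf m = snd e2 * fst m + (- fst e2) * snd m + (snd (cen) * fst e2 - fst cen * snd e2)" for m
    unfolding hf_def det2_def psub_def by (simp add: algebra_simps)
  have hm1: "hf mD1 = 0"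
    unfolding hf_def e2_def det2_def psub_def centroid_def midpt_def using two two16 by (simp add: field_simps)
  have hm2: "hf mD2 = 0"
    unfolding hf_def e2_def det2_def psub_def centroid_def midpt_def using two two16 by (simp add: field_simps)
  have mne: "mD1 \<noteq> mD2" using e12 unfolding e2_def det2_def psub_def by auto
  have lp: "m \<in> line_pts mD1 mD2 \<longleftrightarrow> det2 (psub m cen) e2 = 0" for m
    using affine_zero_set[OF hrep e2nz hm1 hm2 mne, of m] unfolding hf_def by simp
  have key: "m \<in> bisector_locus A B A' B' \<longleftrightarrow> m \<in> midline d1 d2 \<union> line_pts mD1 mD2" for m
  proof -
    have "m \<in> bisector_locus A B A' B' \<longleftrightarrow> PhiQ A B A' B' (fst (psub m cen)) (snd (psub m cen)) = 0"
      using locus_iff PsiM two by simp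
    also have "\<dots> \<longleftrightarrow> det2 (psub m cen) e2 = 0 \<or> det2 e1 (psub m cen) = 0" using Q .
    also have "\<dots> \<longleftrightarrow> m \<in> line_pts mD1 mD2 \<or> m \<in> midline d1 d2" using lp midl by simp
    finally show ?thesis by blast
  qed
  show ?thesis using key by blast
qed

end

lemma midpt_sym: "midpt p q = midpt q p" unfolding midpt_def by (simp add: add.commute)

lemma crosses_sym: "crosses l L1 L2 = crosses l L2 L1" unfolding crosses_def by blast

lemma midpair_sym: "midpair L1 L2 l = midpair L2 L1 l" unfolding midpair_def by (auto simp: midpt_sym)

lemma locus_rot: "bisector_locus B A' B' A = bisector_locus A B A' B'"
  unfolding bisector_locus_def bisects_with_mid_def crosses_sym[of _ A' A] midpair_sym[of A' A] by blast

lemma quad_rot: assumes "quad A B A' B'" shows "quad B A' B' A"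
proof -
  interpret quad A B A' B' by fact
  have "is_quad B A' B' A"
    unfolding is_quad_def using lines dist nsd nconc by auto
  thus ?thesis using two by unfold_locales
qed

context quad begin

lemma partB:
  assumes par: "parallel B B'"
  shows "bisector_locus A B A' B' = midline B B' \<union> line_pts (midB A B A' B') (midB' A B A' B')"
proof -
  interpret r: quad B A' B' A using quad_rot quad_axioms by blast
  have "bisector_locus A B A' B' = bisector_locus B A' B' A" by (rule locus_rot[symmetric])
  also have "\<dots> = midline B B' \<union> line_pts (midA B A' B' A) (midA' B A' B' A)"
    using r.partA par by blast
  moreover have "midA B A' B' A = midB A B A' B'"
    unfolding midA_def midB_def V1_def V4_def V2_def by (simp add: midpt_sym)
  moreover have "midA' B A' B' A = midB' A B A' B'"
    unfolding midA'_def midB'_def V1_def V2_def V3_def V4_def ..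
  ultimately show ?thesis by simp
qed

end

theorem theorem5p2:
  fixes A B A' B' :: "'a::field line" and ab :: "'a pt"
  assumes char: "(2::'a) \<noteq> 0"
    and Q: "is_quad A B A' B'"
    and dp: "is_finite_diag_point A B A' B' ab"
  shows "(conic_degenerate A B A' B' ab \<longleftrightarrow>
            parallel A A' \<or> parallel B B' \<or> parallel (diag1 A B A' B') (diag2 A B A' B'))
       \<and> (parallel A A' \<longrightarrow>
            bisector_locus A B A' B' =
              midline A A' \<union> line_pts (midA A B A' B') (midA' A B A' B'))
       \<and> (parallel B B' \<longrightarrow>
            bisector_locus A B A' B' =
              midline B B' \<union> line_pts (midB A B A' B') (midB' A B A' B'))
       \<and> (parallel (diag1 A B A' B') (diag2 A B A' B') \<longrightarrow>
            bisector_locus A B A' B' =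
              midline (diag1 A B A' B') (diag2 A B A' B')
              \<union> line_pts (midD1 A B A' B') (midD2 A B A' B'))"
proof -
  interpret quad A B A' B' using char Q by unfold_locales
  show ?thesis using degenerate_iff[OF dp] partA partB partD by blast
qed

end
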